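(* Let $K$ be a commutative ring with $1$, let $A$ be a $K$-algebra, and let $B$ be an ideal of $A$. If both $B$ and $A/B$ are finitely generated $K$-algebras, then $A$ is a finitely generated $K$-algebra. If both $B$ and $A/B$ are finitely presented $K$-algebras, then $A$ is a finitely presented $K$-algebra.
   Context: A $K$-algebra is a structure that is simultaneously an associative ring (not necessarily with identity) and a $K$-module, with $K$-bilinear multiplication. The free $K$-algebra $K\langle X\rangle$ on a set $X$ is the semigroup ring over $K$ of the free semigroup $X^+$ (no identity). A $K$-algebra is finitely generated if it is isomorphic to $K\langle X\rangle/I$ with $X$ finite and $I$ an ideal; finitely presented if moreover $I$ can be chosen finitely generated as an ideal. *)

theory Defs
  imports "HOL-Algebra.Module" "HOL-Algebra.FiniteProduct"
begin

text \<open>K-algebras in the sense of the paper: associative, not necessarily unital,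
  with K-bilinear multiplication.  An algebra is represented by a module record;
  its one field is ignored.\<close>

definition K_algebra :: "('k,'e) ring_scheme \<Rightarrow> ('k,'a,'m) module_scheme \<Rightarrow> bool" where
  "K_algebra K A \<longleftrightarrow> module K A \<and>
     (\<forall>x\<in>carrier A. \<forall>y\<in>carrier A. x \<otimes>\<^bsub>A\<^esub> y \<in> carrier A) \<and>
     (\<forall>x\<in>carrier A. \<forall>y\<in>carrier A. \<forall>z\<in>carrier A.
        (x \<otimes>\<^bsub>A\<^esub> y) \<otimes>\<^bsub>A\<^esub> z = x \<otimes>\<^bsub>A\<^esub> (y \<otimes>\<^bsub>A\<^esub> z)) \<and>
     (\<forall>x\<in>carrier A. \<forall>y\<in>carrier A. \<forall>z\<in>carrier A.
        x \<otimes>\<^bsub>A\<^esub> (y \<oplus>\<^bsub>A\<^esub> z) = x \<otimes>\<^bsub>A\<^esub> y \<oplus>\<^bsub>A\<^esub> x \<otimes>\<^bsub>A\<^esub> z \<and>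
        (x \<oplus>\<^bsub>A\<^esub> y) \<otimes>\<^bsub>A\<^esub> z = x \<otimes>\<^bsub>A\<^esub> z \<oplus>\<^bsub>A\<^esub> y \<otimes>\<^bsub>A\<^esub> z) \<and>
     (\<forall>k\<in>carrier K. \<forall>x\<in>carrier A. \<forall>y\<in>carrier A.
        (k \<odot>\<^bsub>A\<^esub> x) \<otimes>\<^bsub>A\<^esub> y = k \<odot>\<^bsub>A\<^esub> (x \<otimes>\<^bsub>A\<^esub> y) \<and>
        x \<otimes>\<^bsub>A\<^esub> (k \<odot>\<^bsub>A\<^esub> y) = k \<odot>\<^bsub>A\<^esub> (x \<otimes>\<^bsub>A\<^esub> y))"

definition alg_ideal :: "('k,'e) ring_scheme \<Rightarrow> ('k,'a,'m) module_scheme \<Rightarrow> 'a set \<Rightarrow> bool" where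
  "alg_ideal K A I \<longleftrightarrow> I \<subseteq> carrier A \<and> \<zero>\<^bsub>A\<^esub> \<in> I \<and>
     (\<forall>x\<in>I. \<forall>y\<in>I. x \<oplus>\<^bsub>A\<^esub> y \<in> I) \<and>
     (\<forall>x\<in>I. \<ominus>\<^bsub>A\<^esub> x \<in> I) \<and>
     (\<forall>k\<in>carrier K. \<forall>x\<in>I. k \<odot>\<^bsub>A\<^esub> x \<in> I) \<and>
     (\<forall>a\<in>carrier A. \<forall>x\<in>I. a \<otimes>\<^bsub>A\<^esub> x \<in> I \<and> x \<otimes>\<^bsub>A\<^esub> a \<in> I)"

definition fg_ideal :: "('k,'e) ring_scheme \<Rightarrow> ('k,'a,'m) module_scheme \<Rightarrow> 'a set \<Rightarrow> bool" where
  "fg_ideal K A I \<longleftrightarrow> alg_ideal K A I \<and>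
     (\<exists>S. finite S \<and> S \<subseteq> carrier A \<and> I = \<Inter> {J. alg_ideal K A J \<and> S \<subseteq> J})"

definition alg_coset :: "('k,'a,'m) module_scheme \<Rightarrow> 'a set \<Rightarrow> 'a \<Rightarrow> 'a set" where
  "alg_coset A I a = {a \<oplus>\<^bsub>A\<^esub> i | i. i \<in> I}"

definition qrep :: "'a set \<Rightarrow> 'a" where
  "qrep X = (SOME x. x \<in> X)"

definition quot_alg :: "('k,'e) ring_scheme \<Rightarrow> ('k,'a,'m) module_scheme \<Rightarrow> 'a set \<Rightarrow> ('k, 'a set) module" where
  "quot_alg K A I =
     \<lparr> carrier = alg_coset A I ` carrier A,
       monoid.mult = (\<lambda>X Y. alg_coset A I (qrep X \<otimes>\<^bsub>A\<^esub> qrep Y)),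
       one = undefined,
       zero = I,
       add = (\<lambda>X Y. alg_coset A I (qrep X \<oplus>\<^bsub>A\<^esub> qrep Y)),
       smult = (\<lambda>k X. alg_coset A I (k \<odot>\<^bsub>A\<^esub> qrep X)) \<rparr>"

definition alg_iso :: "('k,'e) ring_scheme \<Rightarrow> ('k,'a,'m) module_scheme \<Rightarrow> ('k,'b,'n) module_scheme \<Rightarrow> bool" where
  "alg_iso K A C \<longleftrightarrow> (\<exists>f. bij_betw f (carrier A) (carrier C) \<and>
     (\<forall>x\<in>carrier A. \<forall>y\<in>carrier A.
        f (x \<oplus>\<^bsub>A\<^esub> y) = f x \<oplus>\<^bsub>C\<^esub> f y \<and> f (x \<otimes>\<^bsub>A\<^esub> y) = f x \<otimes>\<^bsub>C\<^esub> f y) \<and>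
     (\<forall>k\<in>carrier K. \<forall>x\<in>carrier A. f (k \<odot>\<^bsub>A\<^esub> x) = k \<odot>\<^bsub>C\<^esub> f x))"

text \<open>The free K-algebra K<X> on a set X (of natural numbers, WLOG for finite X):
  the semigroup ring of the free semigroup X^+ (nonempty words over X),
  i.e. finitely supported K-valued functions on nonempty words, with convolution.\<close>

definition free_alg :: "('k,'e) ring_scheme \<Rightarrow> nat set \<Rightarrow> ('k, nat list \<Rightarrow> 'k) module" where
  "free_alg K X =
     \<lparr> carrier = {f. (\<forall>w. f w \<in> carrier K) \<and> finite {w. f w \<noteq> \<zero>\<^bsub>K\<^esub>} \<and>
                    (\<forall>w. f w \<noteq> \<zero>\<^bsub>K\<^esub> \<longrightarrow> w \<noteq> [] \<and> set w \<subseteq> X)},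
       monoid.mult = (\<lambda>f g w. finsum K (\<lambda>(u, v). f u \<otimes>\<^bsub>K\<^esub> g v)
                                {(u, v). u @ v = w \<and> u \<noteq> [] \<and> v \<noteq> []}),
       one = undefined,
       zero = (\<lambda>w. \<zero>\<^bsub>K\<^esub>),
       add = (\<lambda>f g w. f w \<oplus>\<^bsub>K\<^esub> g w),
       smult = (\<lambda>k f w. k \<otimes>\<^bsub>K\<^esub> f w) \<rparr>"

definition fg_algebra :: "('k,'e) ring_scheme \<Rightarrow> ('k,'a,'m) module_scheme \<Rightarrow> bool" where
  "fg_algebra K A \<longleftrightarrow> (\<exists>X I. finite X \<and> alg_ideal K (free_alg K X) I \<and>
      alg_iso K A (quot_alg K (free_alg K X) I))"

definition fp_algebra :: "('k,'e) ring_scheme \<Rightarrow> ('k,'a,'m) module_scheme \<Rightarrow> bool" where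
  "fp_algebra K A \<longleftrightarrow> (\<exists>X I. finite X \<and> fg_ideal K (free_alg K X) I \<and>
      alg_iso K A (quot_alg K (free_alg K X) I))"

end

theory Submission
  imports Defs
begin

context abelian_group begin
lemma t1: "\<lbrakk>a \<in> carrier G; b \<in> carrier G; c \<in> carrier G\<rbrakk> \<Longrightarrow> (a \<oplus> c) \<ominus> (b \<oplus> c) = a \<ominus> b"
  by (simp add: a_minus_def minus_add a_ac r_neg r_neg1 r_neg2)
lemma t2: "\<lbrakk>a \<in> carrier G; b \<in> carrier G\<rbrakk> \<Longrightarrow> (a \<oplus> b) \<ominus> a = b"
  by (metis a_closed a_comm a_minus_def add.inv_solve_right)
lemma t8: "\<lbrakk>a \<in> carrier G; b \<in> carrier G\<rbrakk> \<Longrightarrow> a \<oplus> (b \<ominus> a) = b"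
  by (simp add: a_minus_def a_lcomm[of a b] r_neg)
lemma t3: "\<lbrakk>a \<in> carrier G; b \<in> carrier G; c \<in> carrier G\<rbrakk> \<Longrightarrow> a \<oplus> ((b \<ominus> a) \<oplus> c) = b \<oplus> c"
  by (simp add: a_assoc[symmetric] t8)
lemma t9: "\<lbrakk>a \<in> carrier G; b \<in> carrier G\<rbrakk> \<Longrightarrow> \<ominus>(b \<ominus> a) = a \<ominus> b"
  by (simp add: a_minus_def minus_add minus_minus a_comm)
lemma t4: "\<lbrakk>a \<in> carrier G; b \<in> carrier G; c \<in> carrier G\<rbrakk> \<Longrightarrow> b \<oplus> (\<ominus>(b \<ominus> a) \<oplus> c) = a \<oplus> c"
  by (simp add: t9 t3)
lemma t10: "\<ominus> \<zero> = \<zero>"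
  using minus_equality[of "\<zero>" "\<zero>"] by simp
lemma t7: "\<lbrakk>a \<in> carrier G; b \<in> carrier G; c \<in> carrier G\<rbrakk> \<Longrightarrow> (c \<oplus> a) \<ominus> (c \<oplus> b) = a \<ominus> b"
  using t1[of a b c] by (simp add: a_comm)
end

locale kalg = module K A for K :: "('k,'e) ring_scheme" (structure) and A :: "('k,'a,'m) module_scheme" (structure) +
  assumes mc[simp,intro]: "\<lbrakk>x \<in> carrier A; y \<in> carrier A\<rbrakk> \<Longrightarrow> x \<otimes>\<^bsub>A\<^esub> y \<in> carrier A"
  and massoc: "\<lbrakk>x \<in> carrier A; y \<in> carrier A; z \<in> carrier A\<rbrakk> \<Longrightarrow> (x \<otimes>\<^bsub>A\<^esub> y) \<otimes>\<^bsub>A\<^esub> z = x \<otimes>\<^bsub>A\<^esub> (y \<otimes>\<^bsub>A\<^esub> z)"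
  and rdistr: "\<lbrakk>x \<in> carrier A; y \<in> carrier A; z \<in> carrier A\<rbrakk> \<Longrightarrow> x \<otimes>\<^bsub>A\<^esub> (y \<oplus>\<^bsub>A\<^esub> z) = x \<otimes>\<^bsub>A\<^esub> y \<oplus>\<^bsub>A\<^esub> x \<otimes>\<^bsub>A\<^esub> z"
  and ldistr: "\<lbrakk>x \<in> carrier A; y \<in> carrier A; z \<in> carrier A\<rbrakk> \<Longrightarrow> (x \<oplus>\<^bsub>A\<^esub> y) \<otimes>\<^bsub>A\<^esub> z = x \<otimes>\<^bsub>A\<^esub> z \<oplus>\<^bsub>A\<^esub> y \<otimes>\<^bsub>A\<^esub> z"
  and smul: "\<lbrakk>k \<in> carrier K; x \<in> carrier A; y \<in> carrier A\<rbrakk> \<Longrightarrow> (k \<odot>\<^bsub>A\<^esub> x) \<otimes>\<^bsub>A\<^esub> y = k \<odot>\<^bsub>A\<^esub> (x \<otimes>\<^bsub>A\<^esub> y)"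
  and smur: "\<lbrakk>k \<in> carrier K; x \<in> carrier A; y \<in> carrier A\<rbrakk> \<Longrightarrow> x \<otimes>\<^bsub>A\<^esub> (k \<odot>\<^bsub>A\<^esub> y) = k \<odot>\<^bsub>A\<^esub> (x \<otimes>\<^bsub>A\<^esub> y)"

lemma K_algebra_kalg: "K_algebra K A \<Longrightarrow> kalg K A"
  unfolding K_algebra_def kalg_def kalg_axioms_def by auto

lemma kalg_K_algebra: "kalg K A \<Longrightarrow> K_algebra K A"
  unfolding K_algebra_def kalg_def kalg_axioms_def by auto

context kalg begin

lemma neg_smult: "x \<in> carrier A \<Longrightarrow> \<ominus>\<^bsub>A\<^esub> x = (\<ominus>\<^bsub>K\<^esub> \<one>\<^bsub>K\<^esub>) \<odot>\<^bsub>A\<^esub> x"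
  using smult_l_minus[of "\<one>\<^bsub>K\<^esub>" x] by simp

lemma mzero_l[simp]: "x \<in> carrier A \<Longrightarrow> \<zero>\<^bsub>A\<^esub> \<otimes>\<^bsub>A\<^esub> x = \<zero>\<^bsub>A\<^esub>"
  using smul[of "\<zero>\<^bsub>K\<^esub>" "\<zero>\<^bsub>A\<^esub>" x] by simp

lemma mzero_r[simp]: "x \<in> carrier A \<Longrightarrow> x \<otimes>\<^bsub>A\<^esub> \<zero>\<^bsub>A\<^esub> = \<zero>\<^bsub>A\<^esub>"
  using smur[of "\<zero>\<^bsub>K\<^esub>" x "\<zero>\<^bsub>A\<^esub>"] by simp

lemma mneg_l: "\<lbrakk>x \<in> carrier A; y \<in> carrier A\<rbrakk> \<Longrightarrow> (\<ominus>\<^bsub>A\<^esub> x) \<otimes>\<^bsub>A\<^esub> y = \<ominus>\<^bsub>A\<^esub> (x \<otimes>\<^bsub>A\<^esub> y)"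
  by (simp add: neg_smult smul)

lemma mneg_r: "\<lbrakk>x \<in> carrier A; y \<in> carrier A\<rbrakk> \<Longrightarrow> x \<otimes>\<^bsub>A\<^esub> (\<ominus>\<^bsub>A\<^esub> y) = \<ominus>\<^bsub>A\<^esub> (x \<otimes>\<^bsub>A\<^esub> y)"
  by (simp add: neg_smult smur)

lemma sub_eq0: "\<lbrakk>x \<in> carrier A; y \<in> carrier A\<rbrakk> \<Longrightarrow> x \<ominus>\<^bsub>A\<^esub> y = \<zero>\<^bsub>A\<^esub> \<longleftrightarrow> x = y"
  by (metis a_minus_def add.inv_closed add.inv_solve_right l_zero minus_equality r_neg)

lemma ideal_sub: "alg_ideal K A I \<Longrightarrow> x \<in> I \<Longrightarrow> y \<in> I \<Longrightarrow> x \<ominus>\<^bsub>A\<^esub> y \<in> I"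
  unfolding alg_ideal_def a_minus_def by blast

lemma ideal_carrier: "alg_ideal K A I \<Longrightarrow> x \<in> I \<Longrightarrow> x \<in> carrier A"
  unfolding alg_ideal_def by blast

lemma coset_eq:
  assumes I: "alg_ideal K A I" and x: "x \<in> carrier A" and y: "y \<in> carrier A"
  shows "alg_coset A I x = alg_coset A I y \<longleftrightarrow> x \<ominus>\<^bsub>A\<^esub> y \<in> I"
proof
  have z: "\<zero>\<^bsub>A\<^esub> \<in> I" using I unfolding alg_ideal_def by blast
  assume "alg_coset A I x = alg_coset A I y"
  moreover have "x \<in> alg_coset A I x" unfolding alg_coset_def using z x by (auto intro!: exI[of _ "\<zero>\<^bsub>A\<^esub>"])
  ultimately obtain i where i: "i \<in> I" "x = y \<oplus>\<^bsub>A\<^esub> i" unfolding alg_coset_def by auto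
  have "x \<ominus>\<^bsub>A\<^esub> y = i" using i ideal_carrier[OF I i(1)] y
    by (simp add: t2)
  then show "x \<ominus>\<^bsub>A\<^esub> y \<in> I" using i by simp
next
  assume d: "x \<ominus>\<^bsub>A\<^esub> y \<in> I"
  have dc: "x \<ominus>\<^bsub>A\<^esub> y \<in> carrier A" using x y by simp
  have neg: "\<ominus>\<^bsub>A\<^esub> (x \<ominus>\<^bsub>A\<^esub> y) \<in> I" using I d unfolding alg_ideal_def by blast
  show "alg_coset A I x = alg_coset A I y"
  proof
    show "alg_coset A I x \<subseteq> alg_coset A I y"
    proof
      fix z assume "z \<in> alg_coset A I x"
      then obtain i where i: "i \<in> I" "z = x \<oplus>\<^bsub>A\<^esub> i" unfolding alg_coset_def by auto
      have ic: "i \<in> carrier A" using ideal_carrier[OF I i(1)] .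
      have "z = y \<oplus>\<^bsub>A\<^esub> ((x \<ominus>\<^bsub>A\<^esub> y) \<oplus>\<^bsub>A\<^esub> i)" using i x y ic
        by (simp add: t3)
      moreover have "(x \<ominus>\<^bsub>A\<^esub> y) \<oplus>\<^bsub>A\<^esub> i \<in> I" using I d i(1) unfolding alg_ideal_def by blast
      ultimately show "z \<in> alg_coset A I y" unfolding alg_coset_def by blast
    qed
  next
    show "alg_coset A I y \<subseteq> alg_coset A I x"
    proof
      fix z assume "z \<in> alg_coset A I y"
      then obtain i where i: "i \<in> I" "z = y \<oplus>\<^bsub>A\<^esub> i" unfolding alg_coset_def by auto
      have ic: "i \<in> carrier A" using ideal_carrier[OF I i(1)] .
      have "z = x \<oplus>\<^bsub>A\<^esub> (\<ominus>\<^bsub>A\<^esub> (x \<ominus>\<^bsub>A\<^esub> y) \<oplus>\<^bsub>A\<^esub> i)" using i x y ic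
        by (simp add: t4)
      moreover have "\<ominus>\<^bsub>A\<^esub> (x \<ominus>\<^bsub>A\<^esub> y) \<oplus>\<^bsub>A\<^esub> i \<in> I" using I neg i(1) unfolding alg_ideal_def by blast
      ultimately show "z \<in> alg_coset A I x" unfolding alg_coset_def by blast
    qed
  qed
qed

lemma coset_self: "alg_ideal K A I \<Longrightarrow> x \<in> carrier A \<Longrightarrow> x \<in> alg_coset A I x"
  unfolding alg_coset_def alg_ideal_def by (auto intro!: exI[of _ "\<zero>\<^bsub>A\<^esub>"])

lemma qrep:
  assumes I: "alg_ideal K A I" and x: "x \<in> carrier A"
  shows "qrep (alg_coset A I x) \<in> carrier A \<and> qrep (alg_coset A I x) \<ominus>\<^bsub>A\<^esub> x \<in> I"
proof -
  have "qrep (alg_coset A I x) \<in> alg_coset A I x" unfolding qrep_def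
    using coset_self[OF I x] by (rule someI)
  then obtain i where i: "i \<in> I" "qrep (alg_coset A I x) = x \<oplus>\<^bsub>A\<^esub> i" unfolding alg_coset_def by auto
  have ic: "i \<in> carrier A" using ideal_carrier[OF I i(1)] .
  have "(x \<oplus>\<^bsub>A\<^esub> i) \<ominus>\<^bsub>A\<^esub> x = i" using x ic by (simp add: t2)
  then show ?thesis using i x ic by simp
qed

lemma coset_trans:
  assumes I: "alg_ideal K A I" and "x \<in> carrier A" "y \<in> carrier A" "z \<in> carrier A"
    and "x \<ominus>\<^bsub>A\<^esub> y \<in> I" "y \<ominus>\<^bsub>A\<^esub> z \<in> I"
  shows "alg_coset A I x = alg_coset A I z"
  using assms coset_eq[OF I] by metis

lemma quot_add:
  assumes I: "alg_ideal K A I" and x: "x \<in> carrier A" and y: "y \<in> carrier A"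
  shows "alg_coset A I x \<oplus>\<^bsub>quot_alg K A I\<^esub> alg_coset A I y = alg_coset A I (x \<oplus>\<^bsub>A\<^esub> y)"
proof -
  define x' where "x' = qrep (alg_coset A I x)"
  define y' where "y' = qrep (alg_coset A I y)"
  have x': "x' \<in> carrier A" "x' \<ominus>\<^bsub>A\<^esub> x \<in> I" using qrep[OF I x] x'_def by auto
  have y': "y' \<in> carrier A" "y' \<ominus>\<^bsub>A\<^esub> y \<in> I" using qrep[OF I y] y'_def by auto
  have 1: "(x' \<oplus>\<^bsub>A\<^esub> y') \<ominus>\<^bsub>A\<^esub> (x \<oplus>\<^bsub>A\<^esub> y') \<in> I"
    using x' y' x by (simp add: t1)
  have 2: "(x \<oplus>\<^bsub>A\<^esub> y') \<ominus>\<^bsub>A\<^esub> (x \<oplus>\<^bsub>A\<^esub> y) \<in> I"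
    using x' y' x y by (simp add: t7)
  have "alg_coset A I (x' \<oplus>\<^bsub>A\<^esub> y') = alg_coset A I (x \<oplus>\<^bsub>A\<^esub> y)"
    by (rule coset_trans[OF I _ _ _ 1 2]) (use x y x' y' in auto)
  then show ?thesis by (simp add: quot_alg_def x'_def y'_def)
qed

lemma quot_smult:
  assumes I: "alg_ideal K A I" and x: "x \<in> carrier A" and k: "k \<in> carrier K"
  shows "k \<odot>\<^bsub>quot_alg K A I\<^esub> alg_coset A I x = alg_coset A I (k \<odot>\<^bsub>A\<^esub> x)"
proof -
  define x' where "x' = qrep (alg_coset A I x)"
  have x': "x' \<in> carrier A" "x' \<ominus>\<^bsub>A\<^esub> x \<in> I" using qrep[OF I x] x'_def by auto
  have "(k \<odot>\<^bsub>A\<^esub> x') \<ominus>\<^bsub>A\<^esub> (k \<odot>\<^bsub>A\<^esub> x) = k \<odot>\<^bsub>A\<^esub> (x' \<ominus>\<^bsub>A\<^esub> x)"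
    using x' x k by (simp add: a_minus_def smult_r_distr smult_r_minus)
  also have "\<dots> \<in> I" using I x' k unfolding alg_ideal_def by blast
  finally have "alg_coset A I (k \<odot>\<^bsub>A\<^esub> x') = alg_coset A I (k \<odot>\<^bsub>A\<^esub> x)"
    using coset_eq[OF I] x k x' by simp
  then show ?thesis by (simp add: quot_alg_def x'_def)
qed

lemma quot_mult:
  assumes I: "alg_ideal K A I" and x: "x \<in> carrier A" and y: "y \<in> carrier A"
  shows "alg_coset A I x \<otimes>\<^bsub>quot_alg K A I\<^esub> alg_coset A I y = alg_coset A I (x \<otimes>\<^bsub>A\<^esub> y)"
proof -
  define x' where "x' = qrep (alg_coset A I x)"
  define y' where "y' = qrep (alg_coset A I y)"
  have x': "x' \<in> carrier A" "x' \<ominus>\<^bsub>A\<^esub> x \<in> I" using qrep[OF I x] x'_def by auto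
  have y': "y' \<in> carrier A" "y' \<ominus>\<^bsub>A\<^esub> y \<in> I" using qrep[OF I y] y'_def by auto
  have "(x' \<otimes>\<^bsub>A\<^esub> y') \<ominus>\<^bsub>A\<^esub> (x \<otimes>\<^bsub>A\<^esub> y') = (x' \<ominus>\<^bsub>A\<^esub> x) \<otimes>\<^bsub>A\<^esub> y'"
    using x' y' x by (simp add: a_minus_def ldistr mneg_l)
  also have "\<dots> \<in> I" using I x' y' unfolding alg_ideal_def by blast
  finally have 1: "(x' \<otimes>\<^bsub>A\<^esub> y') \<ominus>\<^bsub>A\<^esub> (x \<otimes>\<^bsub>A\<^esub> y') \<in> I" .
  have "(x \<otimes>\<^bsub>A\<^esub> y') \<ominus>\<^bsub>A\<^esub> (x \<otimes>\<^bsub>A\<^esub> y) = x \<otimes>\<^bsub>A\<^esub> (y' \<ominus>\<^bsub>A\<^esub> y)"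
    using x' y' x y by (simp add: a_minus_def rdistr mneg_r)
  also have "\<dots> \<in> I" using I x' y' x unfolding alg_ideal_def by blast
  finally have 2: "(x \<otimes>\<^bsub>A\<^esub> y') \<ominus>\<^bsub>A\<^esub> (x \<otimes>\<^bsub>A\<^esub> y) \<in> I" .
  have "alg_coset A I (x' \<otimes>\<^bsub>A\<^esub> y') = alg_coset A I (x \<otimes>\<^bsub>A\<^esub> y)"
    by (rule coset_trans[OF I _ _ _ 1 2]) (use x y x' y' in auto)
  then show ?thesis by (simp add: quot_alg_def x'_def y'_def)
qed

lemma quot_carrier: "carrier (quot_alg K A I) = alg_coset A I ` carrier A"
  unfolding quot_alg_def by simp

lemma quot_zero: "alg_ideal K A I \<Longrightarrow> alg_coset A I \<zero>\<^bsub>A\<^esub> = I"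
  unfolding alg_coset_def alg_ideal_def by (auto; metis l_zero subsetD)

lemma coset_zero_iff: "alg_ideal K A I \<Longrightarrow> x \<in> carrier A \<Longrightarrow> alg_coset A I x = alg_coset A I \<zero>\<^bsub>A\<^esub> \<longleftrightarrow> x \<in> I"
  by (simp add: coset_eq a_minus_def t10)

end


definition splits :: "'x list \<Rightarrow> ('x list \<times> 'x list) set" where
  "splits w = {(u, v). u @ v = w \<and> u \<noteq> [] \<and> v \<noteq> []}"

lemma finite_splits[simp]: "finite (splits w)"
proof -
  have "splits w \<subseteq> (\<lambda>n. (take n w, drop n w)) ` {0..length w}"
  proof
    fix p assume "p \<in> splits w"
    then obtain a b where ab: "p = (a, b)" "a @ b = w" unfolding splits_def by auto
    show "p \<in> (\<lambda>n. (take n w, drop n w)) ` {0..length w}"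
      by (rule image_eqI[of _ _ "length a"]) (use ab in auto)
  qed
  then show ?thesis by (rule finite_subset) simp
qed

definition sng :: "('k,'e) ring_scheme \<Rightarrow> 'x \<Rightarrow> 'k \<Rightarrow> 'x \<Rightarrow> 'k" where
  "sng R w k = (\<lambda>t. if t = w then k else \<zero>\<^bsub>R\<^esub>)"

context cring begin

lemma fa_carrier: "f \<in> carrier (free_alg R V) \<longleftrightarrow> (\<forall>w. f w \<in> carrier R) \<and> finite {w. f w \<noteq> \<zero>} \<and>
                    (\<forall>w. f w \<noteq> \<zero> \<longrightarrow> w \<noteq> [] \<and> set w \<subseteq> V)"
  by (simp add: free_alg_def)

lemma fa_add: "f \<oplus>\<^bsub>free_alg R V\<^esub> g = (\<lambda>w. f w \<oplus> g w)"
  by (simp add: free_alg_def)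
lemma fa_zero: "\<zero>\<^bsub>free_alg R V\<^esub> = (\<lambda>w. \<zero>)"
  by (simp add: free_alg_def)
lemma fa_smult: "k \<odot>\<^bsub>free_alg R V\<^esub> f = (\<lambda>w. k \<otimes> f w)"
  by (simp add: free_alg_def)
lemma fa_mult: "f \<otimes>\<^bsub>free_alg R V\<^esub> g = (\<lambda>w. \<Oplus>p\<in>splits w. f (fst p) \<otimes> g (snd p))"
  by (simp add: free_alg_def splits_def split_def)

lemma fa_val: "f \<in> carrier (free_alg R V) \<Longrightarrow> f w \<in> carrier R"
  by (simp add: fa_carrier)

lemma fa_supp: "f \<in> carrier (free_alg R V) \<Longrightarrow> f w \<noteq> \<zero> \<Longrightarrow> w \<noteq> [] \<and> set w \<subseteq> V"
  by (simp add: fa_carrier)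

lemma fa_fin: "f \<in> carrier (free_alg R V) \<Longrightarrow> finite {w. f w \<noteq> \<zero>}"
  by (simp add: fa_carrier)

lemma fa_zero_closed: "\<zero>\<^bsub>free_alg R V\<^esub> \<in> carrier (free_alg R V)"
  by (simp add: fa_carrier fa_zero)

lemma fa_add_closed:
  assumes f: "f \<in> carrier (free_alg R V)" and g: "g \<in> carrier (free_alg R V)"
  shows "f \<oplus>\<^bsub>free_alg R V\<^esub> g \<in> carrier (free_alg R V)"
proof -
  have nz: "\<And>w. f w \<oplus> g w \<noteq> \<zero> \<Longrightarrow> f w \<noteq> \<zero> \<or> g w \<noteq> \<zero>" using f g by (auto simp: fa_val)
  have "{w. f w \<oplus> g w \<noteq> \<zero>} \<subseteq> {w. f w \<noteq> \<zero>} \<union> {w. g w \<noteq> \<zero>}" using nz by blast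
  moreover have "\<And>w. f w \<oplus> g w \<noteq> \<zero> \<Longrightarrow> w \<noteq> [] \<and> set w \<subseteq> V" using nz fa_supp[OF f] fa_supp[OF g] by blast
  moreover have "finite ({w. f w \<noteq> \<zero>} \<union> {w. g w \<noteq> \<zero>})" using fa_fin[OF f] fa_fin[OF g] by simp
  ultimately have "finite {w. f w \<oplus> g w \<noteq> \<zero>}" "\<And>w. f w \<oplus> g w \<noteq> \<zero> \<Longrightarrow> w \<noteq> [] \<and> set w \<subseteq> V"
    using finite_subset by blast+
  then show ?thesis unfolding fa_carrier fa_add using f g by (simp add: fa_val)
qed

lemma fa_smult_closed:
  assumes k: "k \<in> carrier R" and f: "f \<in> carrier (free_alg R V)"
  shows "k \<odot>\<^bsub>free_alg R V\<^esub> f \<in> carrier (free_alg R V)"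
proof -
  have nz: "{w. k \<otimes> f w \<noteq> \<zero>} \<subseteq> {w. f w \<noteq> \<zero>}" using f k by (auto simp: fa_val)
  moreover have "\<And>w. k \<otimes> f w \<noteq> \<zero> \<Longrightarrow> w \<noteq> [] \<and> set w \<subseteq> V" using nz fa_supp[OF f] by blast
  ultimately have "finite {w. k \<otimes> f w \<noteq> \<zero>}" "\<And>w. k \<otimes> f w \<noteq> \<zero> \<Longrightarrow> w \<noteq> [] \<and> set w \<subseteq> V"
    using finite_subset fa_fin[OF f] by blast+
  then show ?thesis unfolding fa_carrier fa_smult using f k by (simp add: fa_val)
qed

lemma fa_neg_closed:
  assumes f: "f \<in> carrier (free_alg R V)"
  shows "(\<lambda>w. \<ominus> f w) \<in> carrier (free_alg R V)"
proof -
  have nz: "{w. \<ominus> f w \<noteq> \<zero>} \<subseteq> {w. f w \<noteq> \<zero>}" using f by (auto simp: fa_val)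
  moreover have "\<And>w. \<ominus> f w \<noteq> \<zero> \<Longrightarrow> w \<noteq> [] \<and> set w \<subseteq> V" using nz fa_supp[OF f] by blast
  ultimately have "finite {w. \<ominus> f w \<noteq> \<zero>}" "\<And>w. \<ominus> f w \<noteq> \<zero> \<Longrightarrow> w \<noteq> [] \<and> set w \<subseteq> V"
    using finite_subset fa_fin[OF f] by blast+
  then show ?thesis unfolding fa_carrier using f by (simp add: fa_val)
qed

lemma fa_mult_val:
  assumes f: "f \<in> carrier (free_alg R V)" and g: "g \<in> carrier (free_alg R V)"
  shows "(f \<otimes>\<^bsub>free_alg R V\<^esub> g) w \<in> carrier R"
  using f g by (auto simp: fa_mult fa_val intro!: finsum_closed)

lemma fa_mult_closed:
  assumes f: "f \<in> carrier (free_alg R V)" and g: "g \<in> carrier (free_alg R V)"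
  shows "f \<otimes>\<^bsub>free_alg R V\<^esub> g \<in> carrier (free_alg R V)"
proof -
  let ?h = "f \<otimes>\<^bsub>free_alg R V\<^esub> g"
  have nz: "\<exists>u v. w = u @ v \<and> f u \<noteq> \<zero> \<and> g v \<noteq> \<zero> \<and> u \<noteq> [] \<and> v \<noteq> []" if "?h w \<noteq> \<zero>" for w
  proof (rule ccontr)
    assume nt: "\<not> ?thesis"
    have "f (fst p) \<otimes> g (snd p) = \<zero>" if p: "p \<in> splits w" for p
    proof -
      obtain a b where ab: "p = (a, b)" "a @ b = w" "a \<noteq> []" "b \<noteq> []" using p unfolding splits_def by auto
      then have "f a = \<zero> \<or> g b = \<zero>" using nt by auto
      then show ?thesis using ab(1) fa_val[OF f, of a] fa_val[OF g, of b] by auto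
    qed
    then have "?h w = \<zero>" unfolding fa_mult by (simp add: add.finprod_one_eqI)
    then show False using that by simp
  qed
  have "{w. ?h w \<noteq> \<zero>} \<subseteq> (\<lambda>p. fst p @ snd p) ` ({w. f w \<noteq> \<zero>} \<times> {w. g w \<noteq> \<zero>})"
  proof
    fix w assume "w \<in> {w. ?h w \<noteq> \<zero>}"
    then obtain u v where "w = u @ v" "f u \<noteq> \<zero>" "g v \<noteq> \<zero>" using nz by blast
    then show "w \<in> (\<lambda>p. fst p @ snd p) ` ({w. f w \<noteq> \<zero>} \<times> {w. g w \<noteq> \<zero>})"
      by (intro image_eqI[of _ _ "(u, v)"]) auto
  qed
  moreover have "finite ((\<lambda>p. fst p @ snd p) ` ({w. f w \<noteq> \<zero>} \<times> {w. g w \<noteq> \<zero>}))"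
    using fa_fin[OF f] fa_fin[OF g] by simp
  ultimately have fin: "finite {w. ?h w \<noteq> \<zero>}" by (rule finite_subset)
  have "?h w \<noteq> \<zero> \<longrightarrow> w \<noteq> [] \<and> set w \<subseteq> V" for w
  proof
    assume "?h w \<noteq> \<zero>"
    then obtain u v where "w = u @ v" "f u \<noteq> \<zero>" "g v \<noteq> \<zero>" "u \<noteq> []" using nz by blast
    then show "w \<noteq> [] \<and> set w \<subseteq> V" using fa_supp[OF f, of u] fa_supp[OF g, of v] by auto
  qed
  then show ?thesis using fin fa_mult_val[OF f g] by (simp add: fa_carrier)
qed

lemma fa_abelian_group: "abelian_group (free_alg R V)"
proof (rule abelian_groupI)
  fix x y z assume x: "x \<in> carrier (free_alg R V)" and y: "y \<in> carrier (free_alg R V)"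
    and z: "z \<in> carrier (free_alg R V)"
  show "x \<oplus>\<^bsub>free_alg R V\<^esub> y \<oplus>\<^bsub>free_alg R V\<^esub> z = x \<oplus>\<^bsub>free_alg R V\<^esub> (y \<oplus>\<^bsub>free_alg R V\<^esub> z)"
    using x y z by (simp add: fa_add fa_val a_assoc)
next
  fix x y assume x: "x \<in> carrier (free_alg R V)" and y: "y \<in> carrier (free_alg R V)"
  show "x \<oplus>\<^bsub>free_alg R V\<^esub> y = y \<oplus>\<^bsub>free_alg R V\<^esub> x"
    using x y by (simp add: fa_add fa_val a_comm)
next
  fix x assume x: "x \<in> carrier (free_alg R V)"
  show "\<zero>\<^bsub>free_alg R V\<^esub> \<oplus>\<^bsub>free_alg R V\<^esub> x = x"
    using x by (simp add: fa_add fa_zero fa_val)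
  show "\<exists>y\<in>carrier (free_alg R V). y \<oplus>\<^bsub>free_alg R V\<^esub> x = \<zero>\<^bsub>free_alg R V\<^esub>"
    using x fa_neg_closed[OF x] by (intro bexI[of _ "\<lambda>w. \<ominus> x w"]) (auto simp: fa_add fa_zero fa_val l_neg)
qed (auto intro: fa_add_closed fa_zero_closed)

lemma fa_module: "module R (free_alg R V)"
  by (rule moduleI) (auto intro: is_cring fa_abelian_group fa_smult_closed[unfolded fa_smult]
      simp: fa_add fa_smult fa_val l_distr r_distr m_assoc)

lemma fa_rdistr:
  assumes f: "f \<in> carrier (free_alg R V)" and g: "g \<in> carrier (free_alg R V)" and h: "h \<in> carrier (free_alg R V)"
  shows "f \<otimes>\<^bsub>free_alg R V\<^esub> (g \<oplus>\<^bsub>free_alg R V\<^esub> h) = f \<otimes>\<^bsub>free_alg R V\<^esub> g \<oplus>\<^bsub>free_alg R V\<^esub> f \<otimes>\<^bsub>free_alg R V\<^esub> h"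
  using f g h by (auto simp: fa_mult fa_add fa_val r_distr Pi_def intro!: ext finsum_addf[symmetric])

lemma fa_ldistr:
  assumes f: "f \<in> carrier (free_alg R V)" and g: "g \<in> carrier (free_alg R V)" and h: "h \<in> carrier (free_alg R V)"
  shows "(g \<oplus>\<^bsub>free_alg R V\<^esub> h) \<otimes>\<^bsub>free_alg R V\<^esub> f = g \<otimes>\<^bsub>free_alg R V\<^esub> f \<oplus>\<^bsub>free_alg R V\<^esub> h \<otimes>\<^bsub>free_alg R V\<^esub> f"
  using f g h by (auto simp: fa_mult fa_add fa_val l_distr Pi_def intro!: ext finsum_addf[symmetric])

lemma fa_smul:
  assumes k: "k \<in> carrier R" and f: "f \<in> carrier (free_alg R V)" and g: "g \<in> carrier (free_alg R V)"
  shows "(k \<odot>\<^bsub>free_alg R V\<^esub> f) \<otimes>\<^bsub>free_alg R V\<^esub> g = k \<odot>\<^bsub>free_alg R V\<^esub> (f \<otimes>\<^bsub>free_alg R V\<^esub> g)"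
  using k f g by (auto simp: fa_mult fa_smult fa_val m_assoc Pi_def intro!: ext finsum_rdistr[symmetric])

lemma fa_smur:
  assumes k: "k \<in> carrier R" and f: "f \<in> carrier (free_alg R V)" and g: "g \<in> carrier (free_alg R V)"
  shows "f \<otimes>\<^bsub>free_alg R V\<^esub> (k \<odot>\<^bsub>free_alg R V\<^esub> g) = k \<odot>\<^bsub>free_alg R V\<^esub> (f \<otimes>\<^bsub>free_alg R V\<^esub> g)"
  using k f g by (auto simp: fa_mult fa_smult fa_val m_lcomm Pi_def intro!: ext finsum_rdistr[symmetric])

lemma fa_mzero_l:
  assumes g: "g \<in> carrier (free_alg R V)"
  shows "\<zero>\<^bsub>free_alg R V\<^esub> \<otimes>\<^bsub>free_alg R V\<^esub> g = \<zero>\<^bsub>free_alg R V\<^esub>"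
  using g by (auto simp: fa_mult fa_zero fa_val intro!: ext add.finprod_one_eqI)

lemma fa_mzero_r:
  assumes g: "g \<in> carrier (free_alg R V)"
  shows "g \<otimes>\<^bsub>free_alg R V\<^esub> \<zero>\<^bsub>free_alg R V\<^esub> = \<zero>\<^bsub>free_alg R V\<^esub>"
  using g by (auto simp: fa_mult fa_zero fa_val intro!: ext add.finprod_one_eqI)

lemma sng_closed: "w \<noteq> [] \<Longrightarrow> set w \<subseteq> V \<Longrightarrow> k \<in> carrier R \<Longrightarrow> sng R w k \<in> carrier (free_alg R V)"
  by (auto simp: fa_carrier sng_def)

lemma sng_mult:
  assumes u: "u \<noteq> []" and v: "v \<noteq> []" and a: "a \<in> carrier R" and b: "b \<in> carrier R"
  shows "sng R u a \<otimes>\<^bsub>free_alg R V\<^esub> sng R v b = sng R (u @ v) (a \<otimes> b)"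
proof (rule ext)
  fix w
  show "(sng R u a \<otimes>\<^bsub>free_alg R V\<^esub> sng R v b) w = sng R (u @ v) (a \<otimes> b) w"
  proof (cases "w = u @ v")
    case True
    have uv: "(u, v) \<in> splits w" using True u v by (simp add: splits_def)
    have "(\<Oplus>p\<in>splits w. sng R u a (fst p) \<otimes> sng R v b (snd p)) =
          (\<Oplus>p\<in>splits w. if (u, v) = p then a \<otimes> b else \<zero>)"
      by (rule finsum_cong') (auto simp: sng_def a b)
    also have "\<dots> = a \<otimes> b"
      using add.finprod_singleton[OF uv finite_splits, of "\<lambda>_. a \<otimes> b"] a b by simp
    finally show ?thesis using True by (simp add: fa_mult sng_def)
  next
    case False
    have "(\<Oplus>p\<in>splits w. sng R u a (fst p) \<otimes> sng R v b (snd p)) = \<zero>"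
      by (rule add.finprod_one_eqI) (use False in \<open>auto simp: sng_def splits_def a b\<close>)
    then show ?thesis using False by (simp add: fa_mult sng_def)
  qed
qed

lemma fa_induct:
  assumes f: "f \<in> carrier (free_alg R V)"
    and z: "P (\<zero>\<^bsub>free_alg R V\<^esub>)"
    and st: "\<And>g w k. g \<in> carrier (free_alg R V) \<Longrightarrow> w \<noteq> [] \<Longrightarrow> set w \<subseteq> V \<Longrightarrow> k \<in> carrier R \<Longrightarrow>
               P g \<Longrightarrow> P (g \<oplus>\<^bsub>free_alg R V\<^esub> sng R w k)"
  shows "P f"
proof -
  have "\<And>f. f \<in> carrier (free_alg R V) \<Longrightarrow> card {w. f w \<noteq> \<zero>} = n \<Longrightarrow> P f" for n
  proof (induction n)
    case 0
    then have "f = (\<lambda>w. \<zero>)" using fa_fin[OF 0(1)] by auto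
    then show ?case using z by (simp add: fa_zero)
  next
    case (Suc n)
    then obtain w where w: "f w \<noteq> \<zero>" by (metis (mono_tags, lifting) card.empty empty_Collect_eq nat.distinct(1))
    define g where "g = f(w := \<zero>)"
    have g: "g \<in> carrier (free_alg R V)" using Suc(2) fa_fin[OF Suc(2)]
      by (auto simp: g_def fa_carrier intro: finite_subset[of _ "{w. f w \<noteq> \<zero>}"])
    have "{t. g t \<noteq> \<zero>} = {t. f t \<noteq> \<zero>} - {w}" by (auto simp: g_def)
    then have "card {t. g t \<noteq> \<zero>} = n" using Suc(3) w fa_fin[OF Suc(2)] by simp
    then have Pg: "P g" using Suc.IH g by blast
    have eq: "f = g \<oplus>\<^bsub>free_alg R V\<^esub> sng R w (f w)"
      using Suc(2) by (auto simp: fa_add g_def sng_def fa_val)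
    have "P (g \<oplus>\<^bsub>free_alg R V\<^esub> sng R w (f w))"
      by (rule st[OF g]) (use fa_supp[OF Suc(2) w] fa_val[OF Suc(2)] Pg in auto)
    with eq show ?case by simp
  qed
  then show ?thesis using f by blast
qed

end


context cring begin

lemma sng_assoc:
  assumes "u \<noteq> []" "v \<noteq> []" "w \<noteq> []" "a \<in> carrier R" "b \<in> carrier R" "c \<in> carrier R"
  shows "(sng R u a \<otimes>\<^bsub>free_alg R V\<^esub> sng R v b) \<otimes>\<^bsub>free_alg R V\<^esub> sng R w c =
         sng R u a \<otimes>\<^bsub>free_alg R V\<^esub> (sng R v b \<otimes>\<^bsub>free_alg R V\<^esub> sng R w c)"
  using assms by (simp add: sng_mult m_assoc)

lemma fa_assoc2:
  assumes u: "u \<noteq> []" "set u \<subseteq> V" and v: "v \<noteq> []" "set v \<subseteq> V" and a: "a \<in> carrier R" and b: "b \<in> carrier R"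
    and h: "h \<in> carrier (free_alg R V)"
  shows "(sng R u a \<otimes>\<^bsub>free_alg R V\<^esub> sng R v b) \<otimes>\<^bsub>free_alg R V\<^esub> h =
         sng R u a \<otimes>\<^bsub>free_alg R V\<^esub> (sng R v b \<otimes>\<^bsub>free_alg R V\<^esub> h)"
  using h
proof (induction h rule: fa_induct[consumes 1, case_names z st])
  case z
  then show ?case using u v a b
    by (simp add: fa_mzero_r sng_closed fa_mult_closed)
next
  case (st g w k)
  note 2 = st
  have s: "sng R u a \<in> carrier (free_alg R V)" "sng R v b \<in> carrier (free_alg R V)"
    "sng R w k \<in> carrier (free_alg R V)" using u v a b 2 by (auto intro: sng_closed)
  show ?case using 2 s
    by (simp add: fa_rdistr fa_mult_closed sng_assoc a b u v)
qed

lemma fa_assoc3: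
  assumes u: "u \<noteq> []" "set u \<subseteq> V" and a: "a \<in> carrier R"
    and g: "g \<in> carrier (free_alg R V)" and h: "h \<in> carrier (free_alg R V)"
  shows "(sng R u a \<otimes>\<^bsub>free_alg R V\<^esub> g) \<otimes>\<^bsub>free_alg R V\<^esub> h =
         sng R u a \<otimes>\<^bsub>free_alg R V\<^esub> (g \<otimes>\<^bsub>free_alg R V\<^esub> h)"
  using g
proof (induction g rule: fa_induct[consumes 1, case_names z st])
  case z
  then show ?case using u a h
    by (simp add: fa_mzero_r fa_mzero_l sng_closed fa_mult_closed)
next
  case (st g w k)
  note 2 = st
  have s: "sng R u a \<in> carrier (free_alg R V)" "sng R w k \<in> carrier (free_alg R V)"
    using u a 2 by (auto intro: sng_closed)
  show ?case using 2 s h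
    by (simp add: fa_rdistr fa_ldistr fa_mult_closed fa_assoc2 a u)
qed

lemma fa_assoc:
  assumes f: "f \<in> carrier (free_alg R V)" and g: "g \<in> carrier (free_alg R V)" and h: "h \<in> carrier (free_alg R V)"
  shows "(f \<otimes>\<^bsub>free_alg R V\<^esub> g) \<otimes>\<^bsub>free_alg R V\<^esub> h =
         f \<otimes>\<^bsub>free_alg R V\<^esub> (g \<otimes>\<^bsub>free_alg R V\<^esub> h)"
  using f
proof (induction f rule: fa_induct[consumes 1, case_names z st])
  case z
  then show ?case using g h
    by (simp add: fa_mzero_l fa_mult_closed)
next
  case (st f w k)
  note 2 = st
  have s: "sng R w k \<in> carrier (free_alg R V)"
    using 2 by (auto intro: sng_closed)
  show ?case using 2 s g h
    by (simp add: fa_ldistr fa_mult_closed fa_assoc3)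
qed

lemma fa_kalg: "kalg R (free_alg R V)"
  unfolding kalg_def kalg_axioms_def
  by (auto simp: fa_module fa_mult_closed fa_assoc fa_rdistr fa_ldistr fa_smul fa_smur)

lemma sng_smult: "k \<in> carrier R \<Longrightarrow> sng R w k = k \<odot>\<^bsub>free_alg R V\<^esub> sng R w \<one>"
  by (auto simp: sng_def fa_smult)

lemma sng_cons: "w \<noteq> [] \<Longrightarrow> sng R (v # w) \<one> = sng R [v] \<one> \<otimes>\<^bsub>free_alg R V\<^esub> sng R w \<one>"
  by (simp add: sng_mult)

lemma fa_gen_induct:
  assumes f: "f \<in> carrier (free_alg R V)"
    and z: "P (\<zero>\<^bsub>free_alg R V\<^esub>)"
    and gen: "\<And>v. v \<in> V \<Longrightarrow> P (sng R [v] \<one>)"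
    and ad: "\<And>a b. a \<in> carrier (free_alg R V) \<Longrightarrow> b \<in> carrier (free_alg R V) \<Longrightarrow> P a \<Longrightarrow> P b \<Longrightarrow> P (a \<oplus>\<^bsub>free_alg R V\<^esub> b)"
    and mu: "\<And>a b. a \<in> carrier (free_alg R V) \<Longrightarrow> b \<in> carrier (free_alg R V) \<Longrightarrow> P a \<Longrightarrow> P b \<Longrightarrow> P (a \<otimes>\<^bsub>free_alg R V\<^esub> b)"
    and sm: "\<And>k a. k \<in> carrier R \<Longrightarrow> a \<in> carrier (free_alg R V) \<Longrightarrow> P a \<Longrightarrow> P (k \<odot>\<^bsub>free_alg R V\<^esub> a)"
  shows "P f"
proof -
  have mono: "w \<noteq> [] \<Longrightarrow> set w \<subseteq> V \<Longrightarrow> P (sng R w \<one>)" for w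
  proof (induction w)
    case Nil then show ?case by simp
  next
    case (Cons v w)
    show ?case
    proof (cases "w = []")
      case True then show ?thesis using Cons gen by simp
    next
      case False
      then show ?thesis using Cons gen mu[of "sng R [v] \<one>" "sng R w \<one>"]
        by (simp add: sng_cons[where V=V] sng_closed)
    qed
  qed
  show ?thesis using f
  proof (induction f rule: fa_induct[consumes 1, case_names z st])
    case z then show ?case by (rule assms(2))
  next
    case (st g w k)
    then show ?case using ad[of g "sng R w k"] sm[of k "sng R w \<one>"] mono[of w]
      by (simp add: sng_closed sng_smult[of k w V] fa_smult_closed)
  qed
qed

end


fun mnm :: "('k,'a,'m) module_scheme \<Rightarrow> (nat \<Rightarrow> 'a) \<Rightarrow> nat list \<Rightarrow> 'a" where
  "mnm A g [] = \<zero>\<^bsub>A\<^esub>"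
| "mnm A g [v] = g v"
| "mnm A g (v # u # w) = g v \<otimes>\<^bsub>A\<^esub> mnm A g (u # w)"

definition ev :: "('k,'e) ring_scheme \<Rightarrow> ('k,'a,'m) module_scheme \<Rightarrow> (nat \<Rightarrow> 'a) \<Rightarrow> (nat list \<Rightarrow> 'k) \<Rightarrow> 'a" where
  "ev K A g f = finsum A (\<lambda>w. f w \<odot>\<^bsub>A\<^esub> mnm A g w) {w. f w \<noteq> \<zero>\<^bsub>K\<^esub>}"

definition ahom :: "('k,'e) ring_scheme \<Rightarrow> ('k,'a,'m) module_scheme \<Rightarrow> ('k,'b,'n) module_scheme \<Rightarrow> ('a \<Rightarrow> 'b) \<Rightarrow> bool" where
  "ahom K A C f \<longleftrightarrow> (\<forall>x\<in>carrier A. f x \<in> carrier C) \<and>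
     (\<forall>x\<in>carrier A. \<forall>y\<in>carrier A. f (x \<oplus>\<^bsub>A\<^esub> y) = f x \<oplus>\<^bsub>C\<^esub> f y \<and> f (x \<otimes>\<^bsub>A\<^esub> y) = f x \<otimes>\<^bsub>C\<^esub> f y) \<and>
     (\<forall>k\<in>carrier K. \<forall>x\<in>carrier A. f (k \<odot>\<^bsub>A\<^esub> x) = k \<odot>\<^bsub>C\<^esub> f x)"

lemma ahomI:
  assumes "\<And>x. x \<in> carrier A \<Longrightarrow> f x \<in> carrier C"
    and "\<And>x y. x \<in> carrier A \<Longrightarrow> y \<in> carrier A \<Longrightarrow> f (x \<oplus>\<^bsub>A\<^esub> y) = f x \<oplus>\<^bsub>C\<^esub> f y"
    and "\<And>x y. x \<in> carrier A \<Longrightarrow> y \<in> carrier A \<Longrightarrow> f (x \<otimes>\<^bsub>A\<^esub> y) = f x \<otimes>\<^bsub>C\<^esub> f y"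
    and "\<And>k x. k \<in> carrier K \<Longrightarrow> x \<in> carrier A \<Longrightarrow> f (k \<odot>\<^bsub>A\<^esub> x) = k \<odot>\<^bsub>C\<^esub> f x"
  shows "ahom K A C f"
  using assms unfolding ahom_def by auto

lemma ahomD:
  assumes "ahom K A C f"
  shows "\<And>x. x \<in> carrier A \<Longrightarrow> f x \<in> carrier C"
    and "\<And>x y. x \<in> carrier A \<Longrightarrow> y \<in> carrier A \<Longrightarrow> f (x \<oplus>\<^bsub>A\<^esub> y) = f x \<oplus>\<^bsub>C\<^esub> f y"
    and "\<And>x y. x \<in> carrier A \<Longrightarrow> y \<in> carrier A \<Longrightarrow> f (x \<otimes>\<^bsub>A\<^esub> y) = f x \<otimes>\<^bsub>C\<^esub> f y"
    and "\<And>k x. k \<in> carrier K \<Longrightarrow> x \<in> carrier A \<Longrightarrow> f (k \<odot>\<^bsub>A\<^esub> x) = k \<odot>\<^bsub>C\<^esub> f x"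
  using assms unfolding ahom_def by auto

lemma ahom_comp: "ahom K A B f \<Longrightarrow> ahom K B C g \<Longrightarrow> ahom K A C (g \<circ> f)"
  unfolding ahom_def by auto

context kalg begin

lemma mon_closed: "(\<And>v. g v \<in> carrier A) \<Longrightarrow> mnm A g w \<in> carrier A"
proof (induction w)
  case (Cons a w) then show ?case by (cases w) auto
qed simp

lemma smult_comm: "a \<in> carrier K \<Longrightarrow> b \<in> carrier K \<Longrightarrow> x \<in> carrier A \<Longrightarrow>
  a \<odot>\<^bsub>A\<^esub> (b \<odot>\<^bsub>A\<^esub> x) = b \<odot>\<^bsub>A\<^esub> (a \<odot>\<^bsub>A\<^esub> x)"
  by (metis smult_assoc1 R.m_comm)

lemma mon_append: "(\<And>v. g v \<in> carrier A) \<Longrightarrow> u \<noteq> [] \<Longrightarrow> v \<noteq> [] \<Longrightarrow>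
    mnm A g (u @ v) = mnm A g u \<otimes>\<^bsub>A\<^esub> mnm A g v"
proof (induction u)
  case Nil then show ?case by simp
next
  case (Cons a u)
  show ?case
  proof (cases u)
    case Nil then show ?thesis using Cons by (cases v) auto
  next
    case (Cons b u')
    then have "mnm A g ((a # u) @ v) = g a \<otimes>\<^bsub>A\<^esub> mnm A g (u @ v)"
      using \<open>v \<noteq> []\<close> by simp
    also have "\<dots> = g a \<otimes>\<^bsub>A\<^esub> (mnm A g u \<otimes>\<^bsub>A\<^esub> mnm A g v)" using Cons.IH Cons.prems Cons by simp
    also have "\<dots> = (g a \<otimes>\<^bsub>A\<^esub> mnm A g u) \<otimes>\<^bsub>A\<^esub> mnm A g v"
      using Cons.prems by (simp add: massoc mon_closed)
    finally show ?thesis using Cons by simp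
  qed
qed

lemma ev_superset:
  assumes g: "\<And>v. g v \<in> carrier A" and f: "f \<in> carrier (free_alg K V)"
    and W: "finite W" "{w. f w \<noteq> \<zero>\<^bsub>K\<^esub>} \<subseteq> W"
  shows "ev K A g f = finsum A (\<lambda>w. f w \<odot>\<^bsub>A\<^esub> mnm A g w) W"
  unfolding ev_def
  by (rule add.finprod_mono_neutral_cong_left)
     (use W g f in \<open>auto simp: fa_val mon_closed\<close>)

lemma ev_closed: "(\<And>v. g v \<in> carrier A) \<Longrightarrow> f \<in> carrier (free_alg K V) \<Longrightarrow> ev K A g f \<in> carrier A"
  unfolding ev_def by (auto intro!: finsum_closed simp: fa_val mon_closed)

lemma ev_zero: "ev K A g (\<zero>\<^bsub>free_alg K V\<^esub>) = \<zero>\<^bsub>A\<^esub>"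
  unfolding ev_def by (simp add: fa_zero)

lemma ev_add:
  assumes g: "\<And>v. g v \<in> carrier A" and f: "f \<in> carrier (free_alg K V)" and h: "h \<in> carrier (free_alg K V)"
  shows "ev K A g (f \<oplus>\<^bsub>free_alg K V\<^esub> h) = ev K A g f \<oplus>\<^bsub>A\<^esub> ev K A g h"
proof -
  let ?W = "{w. f w \<noteq> \<zero>\<^bsub>K\<^esub>} \<union> {w. h w \<noteq> \<zero>\<^bsub>K\<^esub>}"
  have fin: "finite ?W" using fa_fin[OF f] fa_fin[OF h] by simp
  have fh: "f \<oplus>\<^bsub>free_alg K V\<^esub> h \<in> carrier (free_alg K V)" using f h by (rule fa_add_closed)
  have sub: "{w. (f \<oplus>\<^bsub>free_alg K V\<^esub> h) w \<noteq> \<zero>\<^bsub>K\<^esub>} \<subseteq> ?W" using f h by (auto simp: fa_add fa_val)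
  have "ev K A g (f \<oplus>\<^bsub>free_alg K V\<^esub> h) = finsum A (\<lambda>w. (f w \<oplus>\<^bsub>K\<^esub> h w) \<odot>\<^bsub>A\<^esub> mnm A g w) ?W"
    using ev_superset[OF g fh fin sub] by (simp add: fa_add)
  also have "\<dots> = finsum A (\<lambda>w. f w \<odot>\<^bsub>A\<^esub> mnm A g w \<oplus>\<^bsub>A\<^esub> h w \<odot>\<^bsub>A\<^esub> mnm A g w) ?W"
    by (rule finsum_cong') (use f h g in \<open>auto simp: fa_val mon_closed smult_l_distr\<close>)
  also have "\<dots> = ev K A g f \<oplus>\<^bsub>A\<^esub> ev K A g h"
    using ev_superset[OF g f fin] ev_superset[OF g h fin] f h g
    by (simp add: finsum_addf fa_val mon_closed Pi_def)
  finally show ?thesis .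
qed

lemma ev_smult:
  assumes g: "\<And>v. g v \<in> carrier A" and f: "f \<in> carrier (free_alg K V)" and k: "k \<in> carrier K"
  shows "ev K A g (k \<odot>\<^bsub>free_alg K V\<^esub> f) = k \<odot>\<^bsub>A\<^esub> ev K A g f"
proof -
  let ?W = "{w. f w \<noteq> \<zero>\<^bsub>K\<^esub>}"
  have fin: "finite ?W" using fa_fin[OF f] by simp
  have fh: "k \<odot>\<^bsub>free_alg K V\<^esub> f \<in> carrier (free_alg K V)" using k f by (rule fa_smult_closed)
  have sub: "{w. (k \<odot>\<^bsub>free_alg K V\<^esub> f) w \<noteq> \<zero>\<^bsub>K\<^esub>} \<subseteq> ?W" using f k by (auto simp: fa_smult fa_val)
  have "ev K A g (k \<odot>\<^bsub>free_alg K V\<^esub> f) = finsum A (\<lambda>w. (k \<otimes>\<^bsub>K\<^esub> f w) \<odot>\<^bsub>A\<^esub> mnm A g w) ?W"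
    using ev_superset[OF g fh fin sub] by (simp add: fa_smult)
  also have "\<dots> = finsum A (\<lambda>w. k \<odot>\<^bsub>A\<^esub> (f w \<odot>\<^bsub>A\<^esub> mnm A g w)) ?W"
    by (rule finsum_cong') (use f k g in \<open>auto simp: fa_val mon_closed smult_assoc1\<close>)
  also have "\<dots> = k \<odot>\<^bsub>A\<^esub> ev K A g f"
    unfolding ev_def using f k g
    by (simp add: finsum_smult_ldistr[OF fa_fin[OF f] k] fa_val mon_closed Pi_def)
  finally show ?thesis .
qed

lemma ev_sng:
  assumes g: "\<And>v. g v \<in> carrier A" and w: "w \<noteq> []" "set w \<subseteq> V" and k: "k \<in> carrier K"
  shows "ev K A g (sng K w k) = k \<odot>\<^bsub>A\<^esub> mnm A g w"
proof -
  have s: "sng K w k \<in> carrier (free_alg K V)" using w k by (rule sng_closed)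
  have "ev K A g (sng K w k) = finsum A (\<lambda>t. sng K w k t \<odot>\<^bsub>A\<^esub> mnm A g t) {w}"
    by (rule ev_superset[OF g s]) (auto simp: sng_def)
  then show ?thesis using k g by (simp add: sng_def mon_closed)
qed

lemma ev_mult:
  assumes g: "\<And>v. g v \<in> carrier A" and f: "f \<in> carrier (free_alg K V)" and h: "h \<in> carrier (free_alg K V)"
  shows "ev K A g (f \<otimes>\<^bsub>free_alg K V\<^esub> h) = ev K A g f \<otimes>\<^bsub>A\<^esub> ev K A g h"
proof -
  have inner: "ev K A g (sng K u a \<otimes>\<^bsub>free_alg K V\<^esub> h) = ev K A g (sng K u a) \<otimes>\<^bsub>A\<^esub> ev K A g h"
    if u: "u \<noteq> []" "set u \<subseteq> V" and a: "a \<in> carrier K" and h: "h \<in> carrier (free_alg K V)" for u a h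
    using h
  proof (induction h rule: fa_induct[consumes 1, case_names z st])
    case z
    have "sng K u a \<in> carrier (free_alg K V)" using u a by (rule sng_closed)
    then show ?case using u a g by (simp add: fa_mzero_r ev_zero ev_closed)
  next
    case (st h w k)
    have s: "sng K u a \<in> carrier (free_alg K V)" "sng K w k \<in> carrier (free_alg K V)"
      using u a st by (auto intro: sng_closed)
    have "ev K A g (sng K u a \<otimes>\<^bsub>free_alg K V\<^esub> sng K w k) = ev K A g (sng K u a) \<otimes>\<^bsub>A\<^esub> ev K A g (sng K w k)"
    proof -
      have "ev K A g (sng K u a \<otimes>\<^bsub>free_alg K V\<^esub> sng K w k) = (a \<otimes>\<^bsub>K\<^esub> k) \<odot>\<^bsub>A\<^esub> mnm A g (u @ w)"
        using u st a by (simp add: sng_mult ev_sng g)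
      also have "\<dots> = (a \<odot>\<^bsub>A\<^esub> mnm A g u) \<otimes>\<^bsub>A\<^esub> (k \<odot>\<^bsub>A\<^esub> mnm A g w)"
        using u st a g by (simp add: mon_append smul smur smult_assoc1 mon_closed smult_comm)
      finally show ?thesis using u st a g by (simp add: ev_sng)
    qed
    then show ?case using st s
      by (simp add: fa_rdistr fa_mult_closed ev_add g rdistr ev_closed)
  qed
  show ?thesis using f
  proof (induction f rule: fa_induct[consumes 1, case_names z st])
    case z
    then show ?case using h g by (simp add: fa_mzero_l ev_zero ev_closed)
  next
    case (st f w k)
    have s: "sng K w k \<in> carrier (free_alg K V)" using st by (auto intro: sng_closed)
    show ?case using st s h inner[of w k h]
      by (simp add: fa_ldistr fa_mult_closed ev_add g ldistr ev_closed)
  qed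
qed

lemma ev_ahom: "(\<And>v. g v \<in> carrier A) \<Longrightarrow> ahom K (free_alg K V) A (ev K A g)"
  by (rule ahomI) (auto simp: ev_closed ev_add ev_mult ev_smult)

lemma ev_gen: "(\<And>v. g v \<in> carrier A) \<Longrightarrow> v \<in> V \<Longrightarrow> ev K A g (sng K [v] \<one>\<^bsub>K\<^esub>) = g v"
  by (simp add: ev_sng[where V=V])

end

lemma (in cring) ahom_unique:
  assumes f: "ahom R (free_alg R V) C f" and g: "ahom R (free_alg R V) C g"
    and z: "f (\<zero>\<^bsub>free_alg R V\<^esub>) = g (\<zero>\<^bsub>free_alg R V\<^esub>)"
    and gen: "\<And>v. v \<in> V \<Longrightarrow> f (sng R [v] \<one>) = g (sng R [v] \<one>)"
    and x: "x \<in> carrier (free_alg R V)"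
  shows "f x = g x"
  using x
proof (induction x rule: fa_gen_induct[consumes 1, case_names z gen ad mu sm])
  case z then show ?case by (rule assms(3))
next
  case (gen v) then show ?case by (rule assms(4))
qed (simp_all add: ahomD[OF f] ahomD[OF g])


lemma ahom_zero:
  assumes F: "kalg K F" and A: "kalg K A" and e: "ahom K F A e"
  shows "e \<zero>\<^bsub>F\<^esub> = \<zero>\<^bsub>A\<^esub>"
proof -
  interpret F: kalg K F by (rule F)
  interpret A: kalg K A by (rule A)
  have "e \<zero>\<^bsub>F\<^esub> = e (\<zero>\<^bsub>F\<^esub> \<oplus>\<^bsub>F\<^esub> \<zero>\<^bsub>F\<^esub>)" by simp
  also have "\<dots> = e \<zero>\<^bsub>F\<^esub> \<oplus>\<^bsub>A\<^esub> e \<zero>\<^bsub>F\<^esub>" using ahomD(2)[OF e, of "\<zero>\<^bsub>F\<^esub>" "\<zero>\<^bsub>F\<^esub>"] by simp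
  finally show ?thesis using ahomD(1)[OF e, of "\<zero>\<^bsub>F\<^esub>"]
    by (metis A.add.l_cancel_one' F.zero_closed)
qed

lemma ahom_minus:
  assumes F: "kalg K F" and A: "kalg K A" and e: "ahom K F A e"
    and x: "x \<in> carrier F" and y: "y \<in> carrier F"
  shows "e (x \<ominus>\<^bsub>F\<^esub> y) = e x \<ominus>\<^bsub>A\<^esub> e y"
proof -
  interpret F: kalg K F by (rule F)
  interpret A: kalg K A by (rule A)
  have "e (\<ominus>\<^bsub>F\<^esub> y) = \<ominus>\<^bsub>A\<^esub> e y"
    using y ahomD[OF e] by (simp add: F.neg_smult A.neg_smult)
  then show ?thesis using x y ahomD[OF e] by (simp add: a_minus_def)
qed

lemma quot_idem_zero:
  assumes C: "kalg K C" and J: "alg_ideal K C J"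
    and X: "X \<in> carrier (quot_alg K C J)" and XX: "X \<oplus>\<^bsub>quot_alg K C J\<^esub> X = X"
  shows "X = J"
proof -
  interpret C: kalg K C by (rule C)
  obtain x where x: "x \<in> carrier C" "X = alg_coset C J x" using X by (auto simp: C.quot_carrier)
  have "alg_coset C J (x \<oplus>\<^bsub>C\<^esub> x) = alg_coset C J x" using XX x C.quot_add[OF J] by simp
  then have "(x \<oplus>\<^bsub>C\<^esub> x) \<ominus>\<^bsub>C\<^esub> x \<in> J" using C.coset_eq[OF J] x by simp
  then have "x \<in> J" using x by (simp add: C.t2)
  then show ?thesis using x C.coset_zero_iff[OF J] C.quot_zero[OF J] by simp
qed

lemma first_iso:
  assumes F: "kalg K F" and A: "kalg K A" and e: "ahom K F A e" and surj: "e ` carrier F = carrier A"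
  shows "alg_ideal K F {x \<in> carrier F. e x = \<zero>\<^bsub>A\<^esub>} \<and> alg_iso K A (quot_alg K F {x \<in> carrier F. e x = \<zero>\<^bsub>A\<^esub>})"
proof -
  interpret F: kalg K F by (rule F)
  interpret A: kalg K A by (rule A)
  define N where "N = {x \<in> carrier F. e x = \<zero>\<^bsub>A\<^esub>}"
  have ez: "e \<zero>\<^bsub>F\<^esub> = \<zero>\<^bsub>A\<^esub>" by (rule ahom_zero[OF F A e])
  note eD = ahomD[OF e]
  have N: "alg_ideal K F N"
    unfolding alg_ideal_def
  proof (intro conjI ballI)
    show "N \<subseteq> carrier F" unfolding N_def by blast
    show "\<zero>\<^bsub>F\<^esub> \<in> N" using ez unfolding N_def by blast
  next
    fix x y assume "x \<in> N" "y \<in> N"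
    then have xy: "x \<in> carrier F" "y \<in> carrier F" "e x = \<zero>\<^bsub>A\<^esub>" "e y = \<zero>\<^bsub>A\<^esub>" unfolding N_def by auto
    have "e (x \<oplus>\<^bsub>F\<^esub> y) = \<zero>\<^bsub>A\<^esub>" using eD(2)[OF xy(1,2)] xy(3,4) by simp
    then show "x \<oplus>\<^bsub>F\<^esub> y \<in> N" using xy unfolding N_def by blast
  next
    fix x assume "x \<in> N"
    then have xy: "x \<in> carrier F" "e x = \<zero>\<^bsub>A\<^esub>" unfolding N_def by auto
    have m: "\<ominus>\<^bsub>K\<^esub> \<one>\<^bsub>K\<^esub> \<in> carrier K" by simp
    have "e (\<ominus>\<^bsub>F\<^esub> x) = e ((\<ominus>\<^bsub>K\<^esub> \<one>\<^bsub>K\<^esub>) \<odot>\<^bsub>F\<^esub> x)" using F.neg_smult[OF xy(1)] by simp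
    also have "\<dots> = \<zero>\<^bsub>A\<^esub>" using eD(4)[OF m xy(1)] xy(2) A.smult_r_null[OF m] by simp
    finally show "\<ominus>\<^bsub>F\<^esub> x \<in> N" using xy unfolding N_def by blast
  next
    fix k x assume k: "k \<in> carrier K" and "x \<in> N"
    then have xy: "x \<in> carrier F" "e x = \<zero>\<^bsub>A\<^esub>" unfolding N_def by auto
    have "e (k \<odot>\<^bsub>F\<^esub> x) = \<zero>\<^bsub>A\<^esub>" using eD(4)[OF k xy(1)] xy(2) A.smult_r_null[OF k] by simp
    then show "k \<odot>\<^bsub>F\<^esub> x \<in> N" using xy k unfolding N_def by blast
  next
    fix a x assume a: "a \<in> carrier F" and "x \<in> N"
    then have xy: "x \<in> carrier F" "e x = \<zero>\<^bsub>A\<^esub>" unfolding N_def by auto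
    have "e (a \<otimes>\<^bsub>F\<^esub> x) = \<zero>\<^bsub>A\<^esub>" using eD(3)[OF a xy(1)] xy(2) eD(1)[OF a] by simp
    then show "a \<otimes>\<^bsub>F\<^esub> x \<in> N" using xy a unfolding N_def by blast
  next
    fix a x assume a: "a \<in> carrier F" and "x \<in> N"
    then have xy: "x \<in> carrier F" "e x = \<zero>\<^bsub>A\<^esub>" unfolding N_def by auto
    have "e (x \<otimes>\<^bsub>F\<^esub> a) = \<zero>\<^bsub>A\<^esub>" using eD(3)[OF xy(1) a] xy(2) eD(1)[OF a] by simp
    then show "x \<otimes>\<^bsub>F\<^esub> a \<in> N" using xy a unfolding N_def by blast
  qed
  have ceq: "alg_coset F N x = alg_coset F N y \<longleftrightarrow> e x = e y" if "x \<in> carrier F" "y \<in> carrier F" for x y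
    using that F.coset_eq[OF N] ahom_minus[OF F A e] eD A.sub_eq0 by (simp add: N_def)
  define pre where "pre a = (SOME x. x \<in> carrier F \<and> e x = a)" for a
  have pre: "pre a \<in> carrier F \<and> e (pre a) = a" if "a \<in> carrier A" for a
  proof -
    have "a \<in> e ` carrier F" using that surj by simp
    then obtain x where "x \<in> carrier F" "e x = a" by blast
    then have "x \<in> carrier F \<and> e x = a" by simp
    then show ?thesis unfolding pre_def by (rule someI)
  qed
  define phi where "phi a = alg_coset F N (pre a)" for a
  have bij: "bij_betw phi (carrier A) (carrier (quot_alg K F N))"
    unfolding bij_betw_def
  proof
    show "inj_on phi (carrier A)"
      by (rule inj_onI) (metis ceq phi_def pre)
    show "phi ` carrier A = carrier (quot_alg K F N)"
    proof
      show "phi ` carrier A \<subseteq> carrier (quot_alg K F N)" using pre by (auto simp: phi_def F.quot_carrier)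
      show "carrier (quot_alg K F N) \<subseteq> phi ` carrier A"
      proof
        fix X assume "X \<in> carrier (quot_alg K F N)"
        then obtain x where x: "x \<in> carrier F" "X = alg_coset F N x" by (auto simp: F.quot_carrier)
        have "phi (e x) = X" unfolding phi_def using x pre[of "e x"] eD ceq by simp
        then show "X \<in> phi ` carrier A" using x eD by blast
      qed
    qed
  qed
  have hom: "phi (a \<oplus>\<^bsub>A\<^esub> b) = phi a \<oplus>\<^bsub>quot_alg K F N\<^esub> phi b \<and> phi (a \<otimes>\<^bsub>A\<^esub> b) = phi a \<otimes>\<^bsub>quot_alg K F N\<^esub> phi b"
    if "a \<in> carrier A" "b \<in> carrier A" for a b
    using that pre[of a] pre[of b] pre[of "a \<oplus>\<^bsub>A\<^esub> b"] pre[of "a \<otimes>\<^bsub>A\<^esub> b"]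
    by (simp add: phi_def F.quot_add[OF N] F.quot_mult[OF N] ceq eD)
  have sm: "phi (k \<odot>\<^bsub>A\<^esub> a) = k \<odot>\<^bsub>quot_alg K F N\<^esub> phi a" if "k \<in> carrier K" "a \<in> carrier A" for k a
    using that pre[of a] pre[of "k \<odot>\<^bsub>A\<^esub> a"]
    by (simp add: phi_def F.quot_smult[OF N] ceq eD)
  show ?thesis unfolding N_def[symmetric] alg_iso_def using N bij hom sm by blast
qed


locale ext =
  fixes K :: "('k,'e) ring_scheme" and A :: "('k,'a) module" and B :: "'a set"
    and X :: "nat set" and I :: "(nat list \<Rightarrow> 'k) set" and hX :: "'a set \<Rightarrow> (nat list \<Rightarrow> 'k) set"
    and Y :: "nat set" and J :: "(nat list \<Rightarrow> 'k) set" and hB :: "'a \<Rightarrow> (nat list \<Rightarrow> 'k) set"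
  assumes cK: "cring K" and kA: "kalg K A" and idB: "alg_ideal K A B"
    and finX: "finite X" and idI: "alg_ideal K (free_alg K X) I"
    and hX_bij: "bij_betw hX (carrier (quot_alg K A B)) (carrier (quot_alg K (free_alg K X) I))"
    and hX_hom: "\<forall>x\<in>carrier (quot_alg K A B). \<forall>y\<in>carrier (quot_alg K A B).
        hX (x \<oplus>\<^bsub>quot_alg K A B\<^esub> y) = hX x \<oplus>\<^bsub>quot_alg K (free_alg K X) I\<^esub> hX y \<and>
        hX (x \<otimes>\<^bsub>quot_alg K A B\<^esub> y) = hX x \<otimes>\<^bsub>quot_alg K (free_alg K X) I\<^esub> hX y"
    and hX_sm: "\<forall>k\<in>carrier K. \<forall>x\<in>carrier (quot_alg K A B).
        hX (k \<odot>\<^bsub>quot_alg K A B\<^esub> x) = k \<odot>\<^bsub>quot_alg K (free_alg K X) I\<^esub> hX x"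
    and finY: "finite Y" and idJ: "alg_ideal K (free_alg K Y) J"
    and hB_bij: "bij_betw hB B (carrier (quot_alg K (free_alg K Y) J))"
    and hB_hom: "\<forall>x\<in>B. \<forall>y\<in>B.
        hB (x \<oplus>\<^bsub>A\<^esub> y) = hB x \<oplus>\<^bsub>quot_alg K (free_alg K Y) J\<^esub> hB y \<and>
        hB (x \<otimes>\<^bsub>A\<^esub> y) = hB x \<otimes>\<^bsub>quot_alg K (free_alg K Y) J\<^esub> hB y"
    and hB_sm: "\<forall>k\<in>carrier K. \<forall>x\<in>B. hB (k \<odot>\<^bsub>A\<^esub> x) = k \<odot>\<^bsub>quot_alg K (free_alg K Y) J\<^esub> hB x"

sublocale ext \<subseteq> KR: cring K by (rule cK)
sublocale ext \<subseteq> AA: kalg K A by (rule kA)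
sublocale ext \<subseteq> FX: kalg K "free_alg K X" by (rule cring.fa_kalg[OF cK])
sublocale ext \<subseteq> FY: kalg K "free_alg K Y" by (rule cring.fa_kalg[OF cK])

context ext begin

definition "NN = Suc (Max (insert 0 Y))"
definition "sh x = x + NN"
definition "Z = Y \<union> sh ` X"

lemma Y_lt: "y \<in> Y \<Longrightarrow> y < NN"
  using finY unfolding NN_def by (simp add: le_imp_less_Suc)

lemma sh_notY: "sh x \<notin> Y"
  using Y_lt[of "sh x"] unfolding sh_def by auto

lemma sh_inj: "sh x = sh y \<longleftrightarrow> x = y"
  unfolding sh_def by auto

lemma finZ: "finite Z"
  unfolding Z_def using finX finY by simp

lemma Y_sub_Z: "Y \<subseteq> Z" unfolding Z_def by auto

end

sublocale ext \<subseteq> FZ: kalg K "free_alg K Z" by (rule cring.fa_kalg[OF cK])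

context ext begin

definition "chi a = hX (alg_coset A B a)"

definition "ax x = (SOME a. a \<in> carrier A \<and> chi a = alg_coset (free_alg K X) I (sng K [x] \<one>\<^bsub>K\<^esub>))"

definition "bgen y = (SOME b. b \<in> B \<and> hB b = alg_coset (free_alg K Y) J (sng K [y] \<one>\<^bsub>K\<^esub>))"

definition "gA v = (if v \<in> Y then bgen v else if v \<in> sh ` X then ax (v - NN) else \<zero>\<^bsub>A\<^esub>)"

definition "gI x = (if x \<in> X then sng K [sh x] \<one>\<^bsub>K\<^esub> else \<zero>\<^bsub>free_alg K Z\<^esub>)"

definition "iota = ev K (free_alg K Z) gI"

definition "e = ev K A gA"

lemma B_sub: "B \<subseteq> carrier A" using idB unfolding alg_ideal_def by blast

lemma ax_prop: assumes x: "x \<in> X"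
  shows "ax x \<in> carrier A \<and> chi (ax x) = alg_coset (free_alg K X) I (sng K [x] \<one>\<^bsub>K\<^esub>)"
proof -
  have "sng K [x] \<one>\<^bsub>K\<^esub> \<in> carrier (free_alg K X)" using x by (intro KR.sng_closed) auto
  then have "alg_coset (free_alg K X) I (sng K [x] \<one>\<^bsub>K\<^esub>) \<in> carrier (quot_alg K (free_alg K X) I)"
    by (simp add: FX.quot_carrier)
  then obtain Q where Q: "Q \<in> carrier (quot_alg K A B)" "hX Q = alg_coset (free_alg K X) I (sng K [x] \<one>\<^bsub>K\<^esub>)"
    using hX_bij unfolding bij_betw_def by (metis imageE)
  then obtain a where a: "a \<in> carrier A" "Q = alg_coset A B a" by (auto simp: AA.quot_carrier)
  then have "a \<in> carrier A \<and> chi a = alg_coset (free_alg K X) I (sng K [x] \<one>\<^bsub>K\<^esub>)"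
    using Q by (simp add: chi_def)
  then show ?thesis unfolding ax_def by (rule someI)
qed

lemma bgen_prop: assumes y: "y \<in> Y"
  shows "bgen y \<in> B \<and> hB (bgen y) = alg_coset (free_alg K Y) J (sng K [y] \<one>\<^bsub>K\<^esub>)"
proof -
  have "sng K [y] \<one>\<^bsub>K\<^esub> \<in> carrier (free_alg K Y)" using y by (intro KR.sng_closed) auto
  then have "alg_coset (free_alg K Y) J (sng K [y] \<one>\<^bsub>K\<^esub>) \<in> carrier (quot_alg K (free_alg K Y) J)"
    by (simp add: FY.quot_carrier)
  then obtain b where b: "b \<in> B" "hB b = alg_coset (free_alg K Y) J (sng K [y] \<one>\<^bsub>K\<^esub>)"
    using hB_bij unfolding bij_betw_def by (metis imageE)
  then have "b \<in> B \<and> hB b = alg_coset (free_alg K Y) J (sng K [y] \<one>\<^bsub>K\<^esub>)" by simp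
  then show ?thesis unfolding bgen_def by (rule someI)
qed

lemma gA_closed: "gA v \<in> carrier A"
  unfolding gA_def using bgen_prop ax_prop B_sub by (auto simp: sh_def)

lemma gI_closed: "gI x \<in> carrier (free_alg K Z)"
  unfolding gI_def by (auto intro!: KR.sng_closed simp: Z_def KR.fa_zero_closed)

lemma e_hom: "ahom K (free_alg K V) A e"
  unfolding e_def by (rule AA.ev_ahom[OF gA_closed])

lemma iota_hom: "ahom K (free_alg K X) (free_alg K Z) iota"
  unfolding iota_def by (rule FZ.ev_ahom[OF gI_closed])

lemma e_zero: "e \<zero>\<^bsub>free_alg K V\<^esub> = \<zero>\<^bsub>A\<^esub>"
  unfolding e_def by (rule AA.ev_zero)

lemma iota_zero: "iota \<zero>\<^bsub>free_alg K X\<^esub> = \<zero>\<^bsub>free_alg K Z\<^esub>"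
  unfolding iota_def by (rule FZ.ev_zero)

lemma e_gen: "v \<in> V \<Longrightarrow> e (sng K [v] \<one>\<^bsub>K\<^esub>) = gA v"
  unfolding e_def by (rule AA.ev_gen[OF gA_closed])

lemma iota_gen: "x \<in> X \<Longrightarrow> iota (sng K [x] \<one>\<^bsub>K\<^esub>) = sng K [sh x] \<one>\<^bsub>K\<^esub>"
  unfolding iota_def using FZ.ev_gen[of gI, OF gI_closed, of x X] by (simp add: gI_def)

lemma gA_Y: "y \<in> Y \<Longrightarrow> gA y = bgen y" by (simp add: gA_def)
lemma gA_X: "x \<in> X \<Longrightarrow> gA (sh x) = ax x" using sh_notY[of x] by (simp add: gA_def sh_def)

lemma coset_hom: "ahom K A (quot_alg K A B) (alg_coset A B)"
  by (rule ahomI) (auto simp: AA.quot_carrier AA.quot_add[OF idB] AA.quot_mult[OF idB] AA.quot_smult[OF idB])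

lemma cosetX_hom: "ahom K (free_alg K X) (quot_alg K (free_alg K X) I) (alg_coset (free_alg K X) I)"
  by (rule ahomI) (auto simp: FX.quot_carrier FX.quot_add[OF idI] FX.quot_mult[OF idI] FX.quot_smult[OF idI])

lemma hX_ahom: "ahom K (quot_alg K A B) (quot_alg K (free_alg K X) I) hX"
  using hX_bij hX_hom hX_sm unfolding ahom_def bij_betw_def by auto

lemma chi_hom: "ahom K A (quot_alg K (free_alg K X) I) chi"
proof -
  have "chi = hX \<circ> alg_coset A B" unfolding chi_def by auto
  then show ?thesis using ahom_comp[OF coset_hom hX_ahom] by simp
qed

lemma hX_zero: "hX B = I"
proof (rule quot_idem_zero[OF FX.kalg_axioms idI])
  have B: "B = alg_coset A B \<zero>\<^bsub>A\<^esub>" using AA.quot_zero[OF idB] by simp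
  have Bc: "B \<in> carrier (quot_alg K A B)" by (subst B) (simp add: AA.quot_carrier)
  show "hX B \<in> carrier (quot_alg K (free_alg K X) I)" using hX_bij Bc unfolding bij_betw_def by auto
  have "B \<oplus>\<^bsub>quot_alg K A B\<^esub> B = B" by (subst (1 2 3) B) (simp add: AA.quot_add[OF idB])
  then show "hX B \<oplus>\<^bsub>quot_alg K (free_alg K X) I\<^esub> hX B = hX B" using hX_hom Bc by metis
qed

lemma hB_zero: "hB \<zero>\<^bsub>A\<^esub> = J"
proof (rule quot_idem_zero[OF FY.kalg_axioms idJ])
  have z: "\<zero>\<^bsub>A\<^esub> \<in> B" using idB unfolding alg_ideal_def by blast
  show "hB \<zero>\<^bsub>A\<^esub> \<in> carrier (quot_alg K (free_alg K Y) J)" using hB_bij z unfolding bij_betw_def by auto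
  show "hB \<zero>\<^bsub>A\<^esub> \<oplus>\<^bsub>quot_alg K (free_alg K Y) J\<^esub> hB \<zero>\<^bsub>A\<^esub> = hB \<zero>\<^bsub>A\<^esub>" using hB_hom z
    by (metis AA.l_zero AA.zero_closed)
qed


lemma eY: assumes q: "q \<in> carrier (free_alg K Y)"
  shows "e q \<in> B \<and> hB (e q) = alg_coset (free_alg K Y) J q"
  using q
proof (induction q rule: KR.fa_gen_induct[consumes 1, case_names z gen ad mu sm])
  case z
  have "\<zero>\<^bsub>A\<^esub> \<in> B" using idB unfolding alg_ideal_def by blast
  then show ?case using hB_zero FY.quot_zero[OF idJ] by (simp add: e_zero)
next
  case (gen v)
  then show ?case using bgen_prop[of v] by (simp add: e_gen gA_Y)
next
  case (ad a b)
  have ea: "e (a \<oplus>\<^bsub>free_alg K Y\<^esub> b) = e a \<oplus>\<^bsub>A\<^esub> e b" using ahomD(2)[OF e_hom ad(1,2)] .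
  have inB: "e a \<oplus>\<^bsub>A\<^esub> e b \<in> B" using ad(3,4) idB unfolding alg_ideal_def by blast
  have "hB (e a \<oplus>\<^bsub>A\<^esub> e b) = alg_coset (free_alg K Y) J a \<oplus>\<^bsub>quot_alg K (free_alg K Y) J\<^esub> alg_coset (free_alg K Y) J b"
    using hB_hom ad(3,4) by simp
  also have "\<dots> = alg_coset (free_alg K Y) J (a \<oplus>\<^bsub>free_alg K Y\<^esub> b)" using FY.quot_add[OF idJ ad(1,2)] .
  finally show ?case using ea inB by simp
next
  case (mu a b)
  have ea: "e (a \<otimes>\<^bsub>free_alg K Y\<^esub> b) = e a \<otimes>\<^bsub>A\<^esub> e b" using ahomD(3)[OF e_hom mu(1,2)] .
  have inB: "e a \<otimes>\<^bsub>A\<^esub> e b \<in> B" using mu(3,4) B_sub idB unfolding alg_ideal_def by blast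
  have "hB (e a \<otimes>\<^bsub>A\<^esub> e b) = alg_coset (free_alg K Y) J a \<otimes>\<^bsub>quot_alg K (free_alg K Y) J\<^esub> alg_coset (free_alg K Y) J b"
    using hB_hom mu(3,4) by simp
  also have "\<dots> = alg_coset (free_alg K Y) J (a \<otimes>\<^bsub>free_alg K Y\<^esub> b)" using FY.quot_mult[OF idJ mu(1,2)] .
  finally show ?case using ea inB by simp
next
  case (sm k a)
  have ea: "e (k \<odot>\<^bsub>free_alg K Y\<^esub> a) = k \<odot>\<^bsub>A\<^esub> e a" using ahomD(4)[OF e_hom sm(1,2)] .
  have inB: "k \<odot>\<^bsub>A\<^esub> e a \<in> B" using sm(1,3) idB unfolding alg_ideal_def by blast
  have "hB (k \<odot>\<^bsub>A\<^esub> e a) = k \<odot>\<^bsub>quot_alg K (free_alg K Y) J\<^esub> alg_coset (free_alg K Y) J a"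
    using hB_sm sm(1,3) by simp
  also have "\<dots> = alg_coset (free_alg K Y) J (k \<odot>\<^bsub>free_alg K Y\<^esub> a)" using FY.quot_smult[OF idJ sm(2,1)] .
  finally show ?case using ea inB by simp
qed

lemma FY_sub_FZ: "carrier (free_alg K Y) \<subseteq> carrier (free_alg K Z)"
proof
  fix f assume "f \<in> carrier (free_alg K Y)"
  then show "f \<in> carrier (free_alg K Z)" using Y_sub_Z unfolding KR.fa_carrier by blast
qed

lemma chiX: assumes u: "u \<in> carrier (free_alg K X)"
  shows "chi (e (iota u)) = alg_coset (free_alg K X) I u"
proof -
  have h: "ahom K (free_alg K X) (quot_alg K (free_alg K X) I) (chi \<circ> (e \<circ> iota))"
    by (rule ahom_comp[OF ahom_comp[OF iota_hom e_hom[of Z]] chi_hom])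
  have "(chi \<circ> (e \<circ> iota)) u = alg_coset (free_alg K X) I u"
  proof (rule KR.ahom_unique[OF h cosetX_hom _ _ u])
    have "chi \<zero>\<^bsub>A\<^esub> = I" unfolding chi_def using AA.quot_zero[OF idB] hX_zero by simp
    then show "(chi \<circ> (e \<circ> iota)) \<zero>\<^bsub>free_alg K X\<^esub> = alg_coset (free_alg K X) I \<zero>\<^bsub>free_alg K X\<^esub>"
      using FX.quot_zero[OF idI] by (simp add: iota_zero e_zero)
  next
    fix x assume x: "x \<in> X"
    have "sh x \<in> Z" using x by (simp add: Z_def)
    then show "(chi \<circ> (e \<circ> iota)) (sng K [x] \<one>\<^bsub>K\<^esub>) = alg_coset (free_alg K X) I (sng K [x] \<one>\<^bsub>K\<^esub>)"
      using x ax_prop[OF x] by (simp add: iota_gen e_gen gA_X)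
  qed
  then show ?thesis by simp
qed

lemma e_surj: "e ` carrier (free_alg K Z) = carrier A"
proof
  show "e ` carrier (free_alg K Z) \<subseteq> carrier A" using ahomD(1)[OF e_hom] by blast
next
  show "carrier A \<subseteq> e ` carrier (free_alg K Z)"
  proof
    fix a assume a: "a \<in> carrier A"
    have "chi a \<in> carrier (quot_alg K (free_alg K X) I)" using ahomD(1)[OF chi_hom a] .
    then obtain u where u: "u \<in> carrier (free_alg K X)" "chi a = alg_coset (free_alg K X) I u"
      by (auto simp: FX.quot_carrier)
    have iu: "iota u \<in> carrier (free_alg K Z)" using ahomD(1)[OF iota_hom u(1)] .
    have eiu: "e (iota u) \<in> carrier A" using ahomD(1)[OF e_hom iu] .
    have "hX (alg_coset A B a) = hX (alg_coset A B (e (iota u)))"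
      using chiX[OF u(1)] u(2) unfolding chi_def by simp
    moreover have "alg_coset A B a \<in> carrier (quot_alg K A B)" "alg_coset A B (e (iota u)) \<in> carrier (quot_alg K A B)"
      using a eiu by (auto simp: AA.quot_carrier)
    ultimately have "alg_coset A B a = alg_coset A B (e (iota u))"
      using hX_bij unfolding bij_betw_def inj_on_def by blast
    then have d: "a \<ominus>\<^bsub>A\<^esub> e (iota u) \<in> B" using AA.coset_eq[OF idB a eiu] by simp
    then have "hB (a \<ominus>\<^bsub>A\<^esub> e (iota u)) \<in> carrier (quot_alg K (free_alg K Y) J)"
      using hB_bij unfolding bij_betw_def by blast
    then obtain q where q: "q \<in> carrier (free_alg K Y)" "hB (a \<ominus>\<^bsub>A\<^esub> e (iota u)) = alg_coset (free_alg K Y) J q"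
      by (auto simp: FY.quot_carrier)
    have "hB (e q) = hB (a \<ominus>\<^bsub>A\<^esub> e (iota u))" using eY[OF q(1)] q(2) by simp
    then have eq: "e q = a \<ominus>\<^bsub>A\<^esub> e (iota u)"
      using eY[OF q(1)] d hB_bij unfolding bij_betw_def inj_on_def by blast
    have qZ: "q \<in> carrier (free_alg K Z)" using q(1) FY_sub_FZ by blast
    have "e (iota u \<oplus>\<^bsub>free_alg K Z\<^esub> q) = e (iota u) \<oplus>\<^bsub>A\<^esub> e q" using ahomD(2)[OF e_hom iu qZ] .
    also have "\<dots> = a" using eq a eiu by (simp add: AA.t8)
    finally show "a \<in> e ` carrier (free_alg K Z)" using FZ.a_closed[OF iu qZ] by (metis image_eqI)
  qed
qed

lemma fg_result: "fg_algebra K A"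
proof -
  have "alg_ideal K (free_alg K Z) {x \<in> carrier (free_alg K Z). e x = \<zero>\<^bsub>A\<^esub>} \<and>
        alg_iso K A (quot_alg K (free_alg K Z) {x \<in> carrier (free_alg K Z). e x = \<zero>\<^bsub>A\<^esub>})"
    by (rule first_iso[OF FZ.kalg_axioms kA e_hom e_surj])
  then show ?thesis unfolding fg_algebra_def using finZ by blast
qed

end


lemma alg_idealI:
  assumes "I \<subseteq> carrier A" "\<zero>\<^bsub>A\<^esub> \<in> I" "\<And>x y. x \<in> I \<Longrightarrow> y \<in> I \<Longrightarrow> x \<oplus>\<^bsub>A\<^esub> y \<in> I"
    "\<And>x. x \<in> I \<Longrightarrow> \<ominus>\<^bsub>A\<^esub> x \<in> I" "\<And>k x. k \<in> carrier K \<Longrightarrow> x \<in> I \<Longrightarrow> k \<odot>\<^bsub>A\<^esub> x \<in> I"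
    "\<And>a x. a \<in> carrier A \<Longrightarrow> x \<in> I \<Longrightarrow> a \<otimes>\<^bsub>A\<^esub> x \<in> I"
    "\<And>a x. a \<in> carrier A \<Longrightarrow> x \<in> I \<Longrightarrow> x \<otimes>\<^bsub>A\<^esub> a \<in> I"
  shows "alg_ideal K A I"
  unfolding alg_ideal_def using assms by (intro conjI ballI) auto

lemma alg_idealD:
  assumes "alg_ideal K A I"
  shows "I \<subseteq> carrier A" "\<zero>\<^bsub>A\<^esub> \<in> I" "\<And>x y. x \<in> I \<Longrightarrow> y \<in> I \<Longrightarrow> x \<oplus>\<^bsub>A\<^esub> y \<in> I"
    "\<And>x. x \<in> I \<Longrightarrow> \<ominus>\<^bsub>A\<^esub> x \<in> I" "\<And>k x. k \<in> carrier K \<Longrightarrow> x \<in> I \<Longrightarrow> k \<odot>\<^bsub>A\<^esub> x \<in> I"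
    "\<And>a x. a \<in> carrier A \<Longrightarrow> x \<in> I \<Longrightarrow> a \<otimes>\<^bsub>A\<^esub> x \<in> I"
    "\<And>a x. a \<in> carrier A \<Longrightarrow> x \<in> I \<Longrightarrow> x \<otimes>\<^bsub>A\<^esub> a \<in> I"
  using assms unfolding alg_ideal_def by simp_all

lemma (in kalg) carrier_ideal: "alg_ideal K A (carrier A)"
  by (rule alg_idealI) auto

lemma (in kalg) gen_ideal:
  assumes S: "S \<subseteq> carrier A"
  shows "alg_ideal K A (\<Inter>{J. alg_ideal K A J \<and> S \<subseteq> J}) \<and> S \<subseteq> \<Inter>{J. alg_ideal K A J \<and> S \<subseteq> J}"
proof -
  let ?F = "{J. alg_ideal K A J \<and> S \<subseteq> J}"
  have ne: "carrier A \<in> ?F" using S carrier_ideal by simp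
  have "alg_ideal K A (\<Inter>?F)"
  proof (rule alg_idealI)
    show "\<Inter>?F \<subseteq> carrier A" using ne by blast
    show "\<zero>\<^bsub>A\<^esub> \<in> \<Inter>?F" by (auto dest: alg_idealD(2))
  next
    fix x y assume "x \<in> \<Inter>?F" "y \<in> \<Inter>?F"
    then show "x \<oplus>\<^bsub>A\<^esub> y \<in> \<Inter>?F" by (auto dest: alg_idealD(3))
  next
    fix x assume "x \<in> \<Inter>?F"
    then show "\<ominus>\<^bsub>A\<^esub> x \<in> \<Inter>?F" by (auto dest: alg_idealD(4))
  next
    fix k x assume "k \<in> carrier K" "x \<in> \<Inter>?F"
    then show "k \<odot>\<^bsub>A\<^esub> x \<in> \<Inter>?F" by (auto dest: alg_idealD(5))
  next
    fix a x assume "a \<in> carrier A" "x \<in> \<Inter>?F"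
    then show "a \<otimes>\<^bsub>A\<^esub> x \<in> \<Inter>?F" by (auto dest: alg_idealD(6))
  next
    fix a x assume "a \<in> carrier A" "x \<in> \<Inter>?F"
    then show "x \<otimes>\<^bsub>A\<^esub> a \<in> \<Inter>?F" by (auto dest: alg_idealD(7))
  qed
  then show ?thesis by blast
qed

locale ext_fp = ext +
  fixes RX RY
  assumes finRX: "finite RX" and RX_sub: "RX \<subseteq> carrier (free_alg K X)"
    and I_gen: "I = \<Inter>{J'. alg_ideal K (free_alg K X) J' \<and> RX \<subseteq> J'}"
    and finRY: "finite RY" and RY_sub: "RY \<subseteq> carrier (free_alg K Y)"
    and J_gen: "J = \<Inter>{J'. alg_ideal K (free_alg K Y) J' \<and> RY \<subseteq> J'}"

context ext_fp begin

lemma RX_I: "RX \<subseteq> I" unfolding I_gen by blast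
lemma RY_J: "RY \<subseteq> J" unfolding J_gen by blast

definition "KerZ = {x \<in> carrier (free_alg K Z). e x = \<zero>\<^bsub>A\<^esub>}"

lemma KerZ_ideal: "alg_ideal K (free_alg K Z) KerZ"
  using first_iso[OF FZ.kalg_axioms kA e_hom e_surj] unfolding KerZ_def by blast

definition "lift p = (SOME q. q \<in> carrier (free_alg K Y) \<and> e q = e p)"

lemma lift_prop:
  assumes p: "p \<in> carrier (free_alg K Z)" and B: "e p \<in> B"
  shows "lift p \<in> carrier (free_alg K Y) \<and> e (lift p) = e p"
proof -
  have "hB (e p) \<in> carrier (quot_alg K (free_alg K Y) J)" using hB_bij B unfolding bij_betw_def by blast
  then obtain q where q: "q \<in> carrier (free_alg K Y)" "hB (e p) = alg_coset (free_alg K Y) J q"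
    by (auto simp: FY.quot_carrier)
  have "hB (e q) = hB (e p)" using eY[OF q(1)] q(2) by simp
  then have "e q = e p" using eY[OF q(1)] B hB_bij unfolding bij_betw_def inj_on_def by blast
  then have "q \<in> carrier (free_alg K Y) \<and> e q = e p" using q by simp
  then show ?thesis unfolding lift_def by (rule someI[where P="\<lambda>q. q \<in> carrier (free_alg K Y) \<and> e q = e p"])
qed

definition "dd x = sng K [sh x] \<one>\<^bsub>K\<^esub>"
definition "yy y = sng K [y] \<one>\<^bsub>K\<^esub>"

definition "Gs = iota ` RX \<union> (\<lambda>(x, y). dd x \<otimes>\<^bsub>free_alg K Z\<^esub> yy y) ` (X \<times> Y)
   \<union> (\<lambda>(x, y). yy y \<otimes>\<^bsub>free_alg K Z\<^esub> dd x) ` (X \<times> Y)"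

definition "rel p = p \<ominus>\<^bsub>free_alg K Z\<^esub> lift p"

definition "SZ = rel ` Gs \<union> RY"

definition "JZ = \<Inter>{J'. alg_ideal K (free_alg K Z) J' \<and> SZ \<subseteq> J'}"

lemma dd_closed: "x \<in> X \<Longrightarrow> dd x \<in> carrier (free_alg K Z)"
  unfolding dd_def by (rule KR.sng_closed) (auto simp: Z_def)
lemma yy_closed: "y \<in> Y \<Longrightarrow> yy y \<in> carrier (free_alg K Z)"
  unfolding yy_def by (rule KR.sng_closed) (auto simp: Z_def)
lemma yyY_closed: "y \<in> Y \<Longrightarrow> yy y \<in> carrier (free_alg K Y)"
  unfolding yy_def by (rule KR.sng_closed) auto

lemma e_dd: "x \<in> X \<Longrightarrow> e (dd x) = ax x"
  unfolding dd_def by (subst e_gen[where V=Z]) (auto simp: Z_def gA_X)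
lemma e_yy: "y \<in> Y \<Longrightarrow> e (yy y) = bgen y"
  unfolding yy_def by (subst e_gen[where V=Y]) (auto simp: gA_Y)

lemma finGs: "finite Gs"
  unfolding Gs_def using finRX finX finY by simp

lemma Gs_prop: assumes p: "p \<in> Gs" shows "p \<in> carrier (free_alg K Z) \<and> e p \<in> B"
proof -
  { fix r assume r: "r \<in> RX"
    have rc: "r \<in> carrier (free_alg K X)" using r RX_sub by blast
    have ic: "iota r \<in> carrier (free_alg K Z)" using ahomD(1)[OF iota_hom rc] .
    have ec: "e (iota r) \<in> carrier A" using ahomD(1)[OF e_hom ic] .
    have "chi (e (iota r)) = I" using chiX[OF rc] FX.coset_zero_iff[OF idI rc] RX_I r FX.quot_zero[OF idI] by auto
    then have "hX (alg_coset A B (e (iota r))) = hX (alg_coset A B \<zero>\<^bsub>A\<^esub>)"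
      unfolding chi_def using hX_zero AA.quot_zero[OF idB] by simp
    moreover have "alg_coset A B (e (iota r)) \<in> carrier (quot_alg K A B)" "alg_coset A B \<zero>\<^bsub>A\<^esub> \<in> carrier (quot_alg K A B)"
      using ec by (auto simp: AA.quot_carrier)
    ultimately have "alg_coset A B (e (iota r)) = alg_coset A B \<zero>\<^bsub>A\<^esub>"
      using hX_bij unfolding bij_betw_def inj_on_def by blast
    then have "e (iota r) \<in> B" using AA.coset_zero_iff[OF idB ec] by simp
    then have "iota r \<in> carrier (free_alg K Z) \<and> e (iota r) \<in> B" using ic by simp }
  moreover
  { fix x y assume xy: "x \<in> X" "y \<in> Y"
    have "e (dd x \<otimes>\<^bsub>free_alg K Z\<^esub> yy y) = ax x \<otimes>\<^bsub>A\<^esub> bgen y"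
      using ahomD(3)[OF e_hom dd_closed[OF xy(1)] yy_closed[OF xy(2)]] e_dd[OF xy(1)] e_yy[OF xy(2)] by simp
    moreover have "ax x \<otimes>\<^bsub>A\<^esub> bgen y \<in> B" "bgen y \<otimes>\<^bsub>A\<^esub> ax x \<in> B"
      using ax_prop[OF xy(1)] bgen_prop[OF xy(2)] idB unfolding alg_ideal_def by blast+
    moreover have "e (yy y \<otimes>\<^bsub>free_alg K Z\<^esub> dd x) = bgen y \<otimes>\<^bsub>A\<^esub> ax x"
      using ahomD(3)[OF e_hom yy_closed[OF xy(2)] dd_closed[OF xy(1)]] e_dd[OF xy(1)] e_yy[OF xy(2)] by simp
    ultimately have "dd x \<otimes>\<^bsub>free_alg K Z\<^esub> yy y \<in> carrier (free_alg K Z) \<and> e (dd x \<otimes>\<^bsub>free_alg K Z\<^esub> yy y) \<in> B"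
        "yy y \<otimes>\<^bsub>free_alg K Z\<^esub> dd x \<in> carrier (free_alg K Z) \<and> e (yy y \<otimes>\<^bsub>free_alg K Z\<^esub> dd x) \<in> B"
      using dd_closed[OF xy(1)] yy_closed[OF xy(2)] by auto }
  ultimately show ?thesis using p unfolding Gs_def by auto
qed

lemma SZ_sub: "SZ \<subseteq> carrier (free_alg K Z)"
proof -
  have "rel p \<in> carrier (free_alg K Z)" if "p \<in> Gs" for p
    using Gs_prop[OF that] lift_prop[of p] FY_sub_FZ unfolding rel_def by (intro FZ.minus_closed) auto
  then show ?thesis unfolding SZ_def using RY_sub FY_sub_FZ by blast
qed

lemma finSZ: "finite SZ" unfolding SZ_def using finGs finRY by simp

lemma SZ_Ker: "SZ \<subseteq> KerZ"
proof -
  have "rel p \<in> KerZ" if p: "p \<in> Gs" for p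
  proof -
    have pc: "p \<in> carrier (free_alg K Z)" "e p \<in> B" using Gs_prop[OF p] by auto
    have lc: "lift p \<in> carrier (free_alg K Z)" "e (lift p) = e p" using lift_prop[OF pc] FY_sub_FZ by auto
    have "e (rel p) = e p \<ominus>\<^bsub>A\<^esub> e (lift p)" unfolding rel_def
      by (rule ahom_minus[OF FZ.kalg_axioms kA e_hom pc(1) lc(1)])
    also have "\<dots> = \<zero>\<^bsub>A\<^esub>" using lc(2) pc(2) B_sub by (simp add: AA.sub_eq0 subsetD)
    finally show ?thesis using SZ_sub p unfolding KerZ_def SZ_def by auto
  qed
  moreover have "r \<in> KerZ" if r: "r \<in> RY" for r
  proof -
    have rc: "r \<in> carrier (free_alg K Y)" using r RY_sub by blast
    have "hB (e r) = J" using eY[OF rc] FY.coset_zero_iff[OF idJ rc] RY_J r FY.quot_zero[OF idJ] by auto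
    then have "hB (e r) = hB \<zero>\<^bsub>A\<^esub>" using hB_zero by simp
    moreover have "\<zero>\<^bsub>A\<^esub> \<in> B" using idB unfolding alg_ideal_def by blast
    ultimately have "e r = \<zero>\<^bsub>A\<^esub>" using eY[OF rc] hB_bij unfolding bij_betw_def inj_on_def by blast
    then show ?thesis using rc FY_sub_FZ unfolding KerZ_def by auto
  qed
  ultimately show ?thesis unfolding SZ_def by blast
qed

lemma JZ_ideal: "alg_ideal K (free_alg K Z) JZ" and SZ_JZ: "SZ \<subseteq> JZ"
  using FZ.gen_ideal[OF SZ_sub] unfolding JZ_def by auto

lemma JZ_Ker: "JZ \<subseteq> KerZ"
  unfolding JZ_def using KerZ_ideal SZ_Ker by blast

end


context ext_fp begin

lemma FY_ops: "a \<oplus>\<^bsub>free_alg K Y\<^esub> b = a \<oplus>\<^bsub>free_alg K Z\<^esub> b"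
  "a \<otimes>\<^bsub>free_alg K Y\<^esub> b = a \<otimes>\<^bsub>free_alg K Z\<^esub> b"
  "k \<odot>\<^bsub>free_alg K Y\<^esub> a = k \<odot>\<^bsub>free_alg K Z\<^esub> a"
  "\<zero>\<^bsub>free_alg K Y\<^esub> = \<zero>\<^bsub>free_alg K Z\<^esub>"
  by (simp_all add: free_alg_def)

definition "pi x = alg_coset (free_alg K Z) JZ x"

abbreviation "QZ \<equiv> quot_alg K (free_alg K Z) JZ"

lemma pi_add: "a \<in> carrier (free_alg K Z) \<Longrightarrow> b \<in> carrier (free_alg K Z) \<Longrightarrow>
   pi (a \<oplus>\<^bsub>free_alg K Z\<^esub> b) = pi a \<oplus>\<^bsub>QZ\<^esub> pi b"
  unfolding pi_def by (simp add: FZ.quot_add[OF JZ_ideal])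
lemma pi_mult: "a \<in> carrier (free_alg K Z) \<Longrightarrow> b \<in> carrier (free_alg K Z) \<Longrightarrow>
   pi (a \<otimes>\<^bsub>free_alg K Z\<^esub> b) = pi a \<otimes>\<^bsub>QZ\<^esub> pi b"
  unfolding pi_def by (simp add: FZ.quot_mult[OF JZ_ideal])
lemma pi_smult: "k \<in> carrier K \<Longrightarrow> a \<in> carrier (free_alg K Z) \<Longrightarrow>
   pi (k \<odot>\<^bsub>free_alg K Z\<^esub> a) = k \<odot>\<^bsub>QZ\<^esub> pi a"
  unfolding pi_def by (simp add: FZ.quot_smult[OF JZ_ideal])
lemma pi_eq: "a \<in> carrier (free_alg K Z) \<Longrightarrow> b \<in> carrier (free_alg K Z) \<Longrightarrow>
   pi a = pi b \<longleftrightarrow> a \<ominus>\<^bsub>free_alg K Z\<^esub> b \<in> JZ"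
  unfolding pi_def by (rule FZ.coset_eq[OF JZ_ideal])

definition "PY = {t \<in> carrier (free_alg K Z). \<exists>q\<in>carrier (free_alg K Y). pi t = pi q}"

lemma FYZ: "q \<in> carrier (free_alg K Y) \<Longrightarrow> q \<in> carrier (free_alg K Z)"
  using FY_sub_FZ by blast

lemma PY_FY: "q \<in> carrier (free_alg K Y) \<Longrightarrow> q \<in> PY"
  unfolding PY_def using FYZ by blast

lemma PY_c: "t \<in> PY \<Longrightarrow> t \<in> carrier (free_alg K Z)"
  unfolding PY_def by blast

lemma PY_E: assumes "t \<in> PY" obtains q where "q \<in> carrier (free_alg K Y)" "pi t = pi q"
  using assms unfolding PY_def by blast

lemma PY_cong: "s \<in> carrier (free_alg K Z) \<Longrightarrow> t \<in> PY \<Longrightarrow> pi s = pi t \<Longrightarrow> s \<in> PY"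
  unfolding PY_def by auto

lemma PY_add: assumes s: "s \<in> PY" and t: "t \<in> PY" shows "s \<oplus>\<^bsub>free_alg K Z\<^esub> t \<in> PY"
proof -
  obtain q1 where q1: "q1 \<in> carrier (free_alg K Y)" "pi s = pi q1" using s by (rule PY_E)
  obtain q2 where q2: "q2 \<in> carrier (free_alg K Y)" "pi t = pi q2" using t by (rule PY_E)
  have "pi (s \<oplus>\<^bsub>free_alg K Z\<^esub> t) = pi (q1 \<oplus>\<^bsub>free_alg K Z\<^esub> q2)"
    using pi_add[OF PY_c[OF s] PY_c[OF t]] pi_add[OF FYZ[OF q1(1)] FYZ[OF q2(1)]] q1 q2 by simp
  moreover have "q1 \<oplus>\<^bsub>free_alg K Z\<^esub> q2 \<in> carrier (free_alg K Y)"
    using FY.a_closed[OF q1(1) q2(1)] by (simp add: FY_ops)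
  ultimately show ?thesis unfolding PY_def using FZ.a_closed[OF PY_c[OF s] PY_c[OF t]] by blast
qed

lemma PY_mult: assumes s: "s \<in> PY" and t: "t \<in> PY" shows "s \<otimes>\<^bsub>free_alg K Z\<^esub> t \<in> PY"
proof -
  obtain q1 where q1: "q1 \<in> carrier (free_alg K Y)" "pi s = pi q1" using s by (rule PY_E)
  obtain q2 where q2: "q2 \<in> carrier (free_alg K Y)" "pi t = pi q2" using t by (rule PY_E)
  have "pi (s \<otimes>\<^bsub>free_alg K Z\<^esub> t) = pi (q1 \<otimes>\<^bsub>free_alg K Z\<^esub> q2)"
    using pi_mult[OF PY_c[OF s] PY_c[OF t]] pi_mult[OF FYZ[OF q1(1)] FYZ[OF q2(1)]] q1 q2 by simp
  moreover have "q1 \<otimes>\<^bsub>free_alg K Z\<^esub> q2 \<in> carrier (free_alg K Y)"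
    using FY.mc[OF q1(1) q2(1)] by (simp add: FY_ops)
  ultimately show ?thesis unfolding PY_def using FZ.mc[OF PY_c[OF s] PY_c[OF t]] by blast
qed

lemma PY_smult: assumes k: "k \<in> carrier K" and t: "t \<in> PY" shows "k \<odot>\<^bsub>free_alg K Z\<^esub> t \<in> PY"
proof -
  obtain q2 where q2: "q2 \<in> carrier (free_alg K Y)" "pi t = pi q2" using t by (rule PY_E)
  have "pi (k \<odot>\<^bsub>free_alg K Z\<^esub> t) = pi (k \<odot>\<^bsub>free_alg K Z\<^esub> q2)"
    using pi_smult[OF k PY_c[OF t]] pi_smult[OF k FYZ[OF q2(1)]] q2 by simp
  moreover have "k \<odot>\<^bsub>free_alg K Z\<^esub> q2 \<in> carrier (free_alg K Y)"
    using FY.smult_closed[OF k q2(1)] by (simp add: FY_ops)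
  ultimately show ?thesis unfolding PY_def using FZ.smult_closed[OF k PY_c[OF t]] by blast
qed

lemma PY_zero: "\<zero>\<^bsub>free_alg K Z\<^esub> \<in> PY"
  using PY_FY[OF FY.zero_closed] by (simp add: FY_ops)

lemma Gs_PY: assumes p: "p \<in> Gs" shows "p \<in> PY"
proof -
  have pc: "p \<in> carrier (free_alg K Z)" "e p \<in> B" using Gs_prop[OF p] by auto
  have l: "lift p \<in> carrier (free_alg K Y)" using lift_prop[OF pc] by simp
  have "rel p \<in> JZ" using p SZ_JZ unfolding SZ_def by blast
  then have "pi p = pi (lift p)" using pi_eq[OF pc(1) FYZ[OF l]] unfolding rel_def by simp
  then show ?thesis using pc(1) l unfolding PY_def by blast
qed

lemma L0: assumes x: "x \<in> X" and q: "q \<in> carrier (free_alg K Y)"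
  shows "dd x \<otimes>\<^bsub>free_alg K Z\<^esub> q \<in> PY \<and> q \<otimes>\<^bsub>free_alg K Z\<^esub> dd x \<in> PY"
  using q
proof (induction q rule: KR.fa_gen_induct[consumes 1, case_names z gen ad mu sm])
  case z
  then show ?case using PY_zero dd_closed[OF x] by (simp add: FY_ops)
next
  case (gen y)
  have "dd x \<otimes>\<^bsub>free_alg K Z\<^esub> yy y \<in> Gs" "yy y \<otimes>\<^bsub>free_alg K Z\<^esub> dd x \<in> Gs"
    unfolding Gs_def using x gen by auto
  then show ?case using Gs_PY unfolding yy_def by auto
next
  case (ad a b)
  have d: "dd x \<in> carrier (free_alg K Z)" by (rule dd_closed[OF x])
  show ?case using ad FYZ[OF ad(1)] FYZ[OF ad(2)] d
    by (simp add: FY_ops FZ.rdistr FZ.ldistr PY_add)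
next
  case (mu a b)
  have d: "dd x \<in> carrier (free_alg K Z)" by (rule dd_closed[OF x])
  have a: "a \<in> carrier (free_alg K Z)" "a \<in> PY" using FYZ[OF mu(1)] PY_FY[OF mu(1)] by auto
  have b: "b \<in> carrier (free_alg K Z)" "b \<in> PY" using FYZ[OF mu(2)] PY_FY[OF mu(2)] by auto
  have 1: "dd x \<otimes>\<^bsub>free_alg K Z\<^esub> (a \<otimes>\<^bsub>free_alg K Z\<^esub> b) = (dd x \<otimes>\<^bsub>free_alg K Z\<^esub> a) \<otimes>\<^bsub>free_alg K Z\<^esub> b"
    using FZ.massoc[OF d a(1) b(1)] by simp
  have 2: "(a \<otimes>\<^bsub>free_alg K Z\<^esub> b) \<otimes>\<^bsub>free_alg K Z\<^esub> dd x = a \<otimes>\<^bsub>free_alg K Z\<^esub> (b \<otimes>\<^bsub>free_alg K Z\<^esub> dd x)"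
    using FZ.massoc[OF a(1) b(1) d] by simp
  show ?case using mu 1 2 a b by (simp add: FY_ops PY_mult)
next
  case (sm k a)
  have d: "dd x \<in> carrier (free_alg K Z)" by (rule dd_closed[OF x])
  show ?case using sm FYZ[OF sm(2)] d
    by (simp add: FY_ops FZ.smul FZ.smur PY_smult)
qed

lemma reduce:
  assumes s: "s \<in> carrier (free_alg K Z)"
    and h: "\<And>q. q \<in> carrier (free_alg K Y) \<Longrightarrow> s \<otimes>\<^bsub>free_alg K Z\<^esub> q \<in> PY \<and> q \<otimes>\<^bsub>free_alg K Z\<^esub> s \<in> PY"
    and t: "t \<in> PY"
  shows "s \<otimes>\<^bsub>free_alg K Z\<^esub> t \<in> PY \<and> t \<otimes>\<^bsub>free_alg K Z\<^esub> s \<in> PY"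
proof -
  obtain q where q: "q \<in> carrier (free_alg K Y)" "pi t = pi q" using t by (rule PY_E)
  have tc: "t \<in> carrier (free_alg K Z)" by (rule PY_c[OF t])
  have qc: "q \<in> carrier (free_alg K Z)" by (rule FYZ[OF q(1)])
  have "pi (s \<otimes>\<^bsub>free_alg K Z\<^esub> t) = pi (s \<otimes>\<^bsub>free_alg K Z\<^esub> q)"
    using pi_mult[OF s tc] pi_mult[OF s qc] q(2) by simp
  moreover have "pi (t \<otimes>\<^bsub>free_alg K Z\<^esub> s) = pi (q \<otimes>\<^bsub>free_alg K Z\<^esub> s)"
    using pi_mult[OF tc s] pi_mult[OF qc s] q(2) by simp
  ultimately show ?thesis using h[OF q(1)] PY_cong FZ.mc s tc by blast
qed

lemma L1':
  assumes u: "u \<in> carrier (free_alg K X)"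
  shows "\<forall>q\<in>carrier (free_alg K Y). iota u \<otimes>\<^bsub>free_alg K Z\<^esub> q \<in> PY \<and> q \<otimes>\<^bsub>free_alg K Z\<^esub> iota u \<in> PY"
  using u
proof (induction u rule: KR.fa_gen_induct[consumes 1, case_names z gen ad mu sm])
  case z
  show ?case using PY_zero FYZ by (simp add: iota_zero)
next
  case (gen x)
  then show ?case using L0[OF gen] by (simp add: iota_gen dd_def)
next
  case (ad a b)
  have ia: "iota a \<in> carrier (free_alg K Z)" "iota b \<in> carrier (free_alg K Z)"
    using ahomD(1)[OF iota_hom] ad(1,2) by auto
  have e: "iota (a \<oplus>\<^bsub>free_alg K X\<^esub> b) = iota a \<oplus>\<^bsub>free_alg K Z\<^esub> iota b"
    using ahomD(2)[OF iota_hom ad(1,2)] .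
  show ?case using ad ia FYZ by (simp add: e FZ.rdistr FZ.ldistr PY_add)
next
  case (mu a b)
  have ia: "iota a \<in> carrier (free_alg K Z)" "iota b \<in> carrier (free_alg K Z)"
    using ahomD(1)[OF iota_hom] mu(1,2) by auto
  have e: "iota (a \<otimes>\<^bsub>free_alg K X\<^esub> b) = iota a \<otimes>\<^bsub>free_alg K Z\<^esub> iota b"
    using ahomD(3)[OF iota_hom mu(1,2)] .
  show ?case
  proof
    fix q assume q: "q \<in> carrier (free_alg K Y)"
    have qc: "q \<in> carrier (free_alg K Z)" by (rule FYZ[OF q])
    have 1: "iota b \<otimes>\<^bsub>free_alg K Z\<^esub> q \<in> PY" using mu(4) q by blast
    have 2: "q \<otimes>\<^bsub>free_alg K Z\<^esub> iota a \<in> PY" using mu(3) q by blast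
    have "iota a \<otimes>\<^bsub>free_alg K Z\<^esub> (iota b \<otimes>\<^bsub>free_alg K Z\<^esub> q) \<in> PY"
      using reduce[OF ia(1) _ 1] mu(3) by blast
    moreover have "(q \<otimes>\<^bsub>free_alg K Z\<^esub> iota a) \<otimes>\<^bsub>free_alg K Z\<^esub> iota b \<in> PY"
      using reduce[OF ia(2) _ 2] mu(4) by blast
    ultimately show "iota (a \<otimes>\<^bsub>free_alg K X\<^esub> b) \<otimes>\<^bsub>free_alg K Z\<^esub> q \<in> PY \<and>
          q \<otimes>\<^bsub>free_alg K Z\<^esub> iota (a \<otimes>\<^bsub>free_alg K X\<^esub> b) \<in> PY"
      using ia qc by (simp add: e FZ.massoc)
  qed
next
  case (sm k a)
  have ia: "iota a \<in> carrier (free_alg K Z)" using ahomD(1)[OF iota_hom] sm(2) by auto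
  have e: "iota (k \<odot>\<^bsub>free_alg K X\<^esub> a) = k \<odot>\<^bsub>free_alg K Z\<^esub> iota a"
    using ahomD(4)[OF iota_hom sm(1,2)] .
  show ?case using sm ia FYZ by (simp add: e FZ.smul FZ.smur PY_smult)
qed

lemma L1: "u \<in> carrier (free_alg K X) \<Longrightarrow> t \<in> PY \<Longrightarrow>
   iota u \<otimes>\<^bsub>free_alg K Z\<^esub> t \<in> PY \<and> t \<otimes>\<^bsub>free_alg K Z\<^esub> iota u \<in> PY"
  using reduce[OF ahomD(1)[OF iota_hom] _] L1' by blast

end


context ext_fp begin

lemma PZ: assumes p: "p \<in> carrier (free_alg K Z)"
  shows "\<exists>u\<in>carrier (free_alg K X). \<exists>t\<in>PY. p = iota u \<oplus>\<^bsub>free_alg K Z\<^esub> t"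
  using p
proof (induction p rule: KR.fa_gen_induct[consumes 1, case_names z gen ad mu sm])
  case z
  have "\<zero>\<^bsub>free_alg K Z\<^esub> = iota \<zero>\<^bsub>free_alg K X\<^esub> \<oplus>\<^bsub>free_alg K Z\<^esub> \<zero>\<^bsub>free_alg K Z\<^esub>"
    by (simp add: iota_zero)
  then show ?case using PY_zero FX.zero_closed by blast
next
  case (gen z)
  show ?case
  proof (cases "z \<in> Y")
    case True
    have t: "sng K [z] \<one>\<^bsub>K\<^esub> \<in> PY" using PY_FY yyY_closed[OF True] unfolding yy_def by blast
    have "sng K [z] \<one>\<^bsub>K\<^esub> = iota \<zero>\<^bsub>free_alg K X\<^esub> \<oplus>\<^bsub>free_alg K Z\<^esub> sng K [z] \<one>\<^bsub>K\<^esub>"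
      using PY_c[OF t] by (simp add: iota_zero)
    then show ?thesis using t FX.zero_closed by blast
  next
    case False
    then obtain x where x: "x \<in> X" "z = sh x" using gen unfolding Z_def by blast
    have u: "sng K [x] \<one>\<^bsub>K\<^esub> \<in> carrier (free_alg K X)" using x by (intro KR.sng_closed) auto
    have "sng K [z] \<one>\<^bsub>K\<^esub> = iota (sng K [x] \<one>\<^bsub>K\<^esub>) \<oplus>\<^bsub>free_alg K Z\<^esub> \<zero>\<^bsub>free_alg K Z\<^esub>"
      using x dd_closed[OF x(1)] by (simp add: iota_gen dd_def)
    then show ?thesis using u PY_zero by blast
  qed
next
  case (ad a b)
  then obtain u1 t1 u2 t2 where h: "u1 \<in> carrier (free_alg K X)" "t1 \<in> PY" "a = iota u1 \<oplus>\<^bsub>free_alg K Z\<^esub> t1"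
    "u2 \<in> carrier (free_alg K X)" "t2 \<in> PY" "b = iota u2 \<oplus>\<^bsub>free_alg K Z\<^esub> t2" by blast
  have ic: "iota u1 \<in> carrier (free_alg K Z)" "iota u2 \<in> carrier (free_alg K Z)"
    using ahomD(1)[OF iota_hom] h by auto
  have tc: "t1 \<in> carrier (free_alg K Z)" "t2 \<in> carrier (free_alg K Z)" using PY_c h by auto
  have "a \<oplus>\<^bsub>free_alg K Z\<^esub> b = iota (u1 \<oplus>\<^bsub>free_alg K X\<^esub> u2) \<oplus>\<^bsub>free_alg K Z\<^esub> (t1 \<oplus>\<^bsub>free_alg K Z\<^esub> t2)"
    using h ic tc ahomD(2)[OF iota_hom h(1) h(4)] by (simp add: FZ.a_ac)
  then show ?case using PY_add[OF h(2) h(5)] FX.a_closed[OF h(1) h(4)] by blast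
next
  case (mu a b)
  then obtain u1 t1 u2 t2 where h: "u1 \<in> carrier (free_alg K X)" "t1 \<in> PY" "a = iota u1 \<oplus>\<^bsub>free_alg K Z\<^esub> t1"
    "u2 \<in> carrier (free_alg K X)" "t2 \<in> PY" "b = iota u2 \<oplus>\<^bsub>free_alg K Z\<^esub> t2" by blast
  have ic: "iota u1 \<in> carrier (free_alg K Z)" "iota u2 \<in> carrier (free_alg K Z)"
    using ahomD(1)[OF iota_hom] h by auto
  have tc: "t1 \<in> carrier (free_alg K Z)" "t2 \<in> carrier (free_alg K Z)" using PY_c h by auto
  define w where "w = (iota u1 \<otimes>\<^bsub>free_alg K Z\<^esub> t2 \<oplus>\<^bsub>free_alg K Z\<^esub> t1 \<otimes>\<^bsub>free_alg K Z\<^esub> iota u2)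
     \<oplus>\<^bsub>free_alg K Z\<^esub> t1 \<otimes>\<^bsub>free_alg K Z\<^esub> t2"
  have wP: "w \<in> PY" unfolding w_def
    using L1[OF h(1) h(5)] L1[OF h(4) h(2)] PY_mult[OF h(2) h(5)] by (intro PY_add) auto
  have "a \<otimes>\<^bsub>free_alg K Z\<^esub> b = (iota u1 \<otimes>\<^bsub>free_alg K Z\<^esub> iota u2) \<oplus>\<^bsub>free_alg K Z\<^esub> w"
    unfolding w_def h(3) h(6) using ic tc by (simp add: FZ.ldistr FZ.rdistr FZ.a_ac)
  also have "\<dots> = iota (u1 \<otimes>\<^bsub>free_alg K X\<^esub> u2) \<oplus>\<^bsub>free_alg K Z\<^esub> w"
    using ahomD(3)[OF iota_hom h(1) h(4)] by simp
  finally show ?case using wP FX.mc[OF h(1) h(4)] by blast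
next
  case (sm k a)
  then obtain u t where h: "u \<in> carrier (free_alg K X)" "t \<in> PY" "a = iota u \<oplus>\<^bsub>free_alg K Z\<^esub> t" by blast
  have ic: "iota u \<in> carrier (free_alg K Z)" using ahomD(1)[OF iota_hom] h by auto
  have tc: "t \<in> carrier (free_alg K Z)" using PY_c h by auto
  have "k \<odot>\<^bsub>free_alg K Z\<^esub> a = iota (k \<odot>\<^bsub>free_alg K X\<^esub> u) \<oplus>\<^bsub>free_alg K Z\<^esub> k \<odot>\<^bsub>free_alg K Z\<^esub> t"
    using h ic tc sm(1) ahomD(4)[OF iota_hom sm(1) h(1)] by (simp add: FZ.smult_r_distr)
  then show ?case using PY_smult[OF sm(1) h(2)] FX.smult_closed[OF sm(1) h(1)] by blast
qed

lemma WX: "I \<subseteq> {u \<in> carrier (free_alg K X). iota u \<in> PY}"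
proof -
  let ?W = "{u \<in> carrier (free_alg K X). iota u \<in> PY}"
  have ideal: "alg_ideal K (free_alg K X) ?W"
  proof (rule alg_idealI)
    show "?W \<subseteq> carrier (free_alg K X)" by blast
    show "\<zero>\<^bsub>free_alg K X\<^esub> \<in> ?W" using PY_zero by (simp add: iota_zero)
  next
    fix a b assume "a \<in> ?W" "b \<in> ?W"
    then show "a \<oplus>\<^bsub>free_alg K X\<^esub> b \<in> ?W" using ahomD(2)[OF iota_hom] PY_add by auto
  next
    fix a assume a: "a \<in> ?W"
    have m: "\<ominus>\<^bsub>K\<^esub> \<one>\<^bsub>K\<^esub> \<in> carrier K" by simp
    have "\<ominus>\<^bsub>free_alg K X\<^esub> a = (\<ominus>\<^bsub>K\<^esub> \<one>\<^bsub>K\<^esub>) \<odot>\<^bsub>free_alg K X\<^esub> a" using a FX.neg_smult by auto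
    then show "\<ominus>\<^bsub>free_alg K X\<^esub> a \<in> ?W" using a ahomD(4)[OF iota_hom m] PY_smult[OF m] by auto
  next
    fix k a assume "k \<in> carrier K" "a \<in> ?W"
    then show "k \<odot>\<^bsub>free_alg K X\<^esub> a \<in> ?W" using ahomD(4)[OF iota_hom] PY_smult by auto
  next
    fix c a assume "c \<in> carrier (free_alg K X)" "a \<in> ?W"
    then show "c \<otimes>\<^bsub>free_alg K X\<^esub> a \<in> ?W" using ahomD(3)[OF iota_hom] L1 by auto
  next
    fix c a assume "c \<in> carrier (free_alg K X)" "a \<in> ?W"
    then show "a \<otimes>\<^bsub>free_alg K X\<^esub> c \<in> ?W" using ahomD(3)[OF iota_hom] L1 by auto
  qed
  have "RX \<subseteq> ?W" using RX_sub Gs_PY unfolding Gs_def by blast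
  then show ?thesis using ideal unfolding I_gen by blast
qed

lemma WY: "J \<subseteq> JZ"
proof -
  let ?W = "{q \<in> carrier (free_alg K Y). q \<in> JZ}"
  note Z = alg_idealD[OF JZ_ideal]
  have ideal: "alg_ideal K (free_alg K Y) ?W"
  proof (rule alg_idealI)
    show "?W \<subseteq> carrier (free_alg K Y)" by blast
    show "\<zero>\<^bsub>free_alg K Y\<^esub> \<in> ?W" using Z(2) FY.zero_closed by (simp add: FY_ops(4)[symmetric])
  next
    fix a b assume "a \<in> ?W" "b \<in> ?W"
    then show "a \<oplus>\<^bsub>free_alg K Y\<^esub> b \<in> ?W" using Z(3) FY.a_closed by (auto simp: FY_ops)
  next
    fix a assume a: "a \<in> ?W"
    have m: "\<ominus>\<^bsub>K\<^esub> \<one>\<^bsub>K\<^esub> \<in> carrier K" by simp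
    have "\<ominus>\<^bsub>free_alg K Y\<^esub> a = (\<ominus>\<^bsub>K\<^esub> \<one>\<^bsub>K\<^esub>) \<odot>\<^bsub>free_alg K Y\<^esub> a" using a FY.neg_smult by auto
    then show "\<ominus>\<^bsub>free_alg K Y\<^esub> a \<in> ?W" using a Z(5)[OF m] FY.smult_closed[OF m] by (auto simp: FY_ops)
  next
    fix k a assume "k \<in> carrier K" "a \<in> ?W"
    then show "k \<odot>\<^bsub>free_alg K Y\<^esub> a \<in> ?W" using Z(5) FY.smult_closed by (auto simp: FY_ops)
  next
    fix c a assume "c \<in> carrier (free_alg K Y)" "a \<in> ?W"
    then show "c \<otimes>\<^bsub>free_alg K Y\<^esub> a \<in> ?W" using Z(6) FY.mc FYZ by (auto simp: FY_ops)
  next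
    fix c a assume "c \<in> carrier (free_alg K Y)" "a \<in> ?W"
    then show "a \<otimes>\<^bsub>free_alg K Y\<^esub> c \<in> ?W" using Z(7) FY.mc FYZ by (auto simp: FY_ops)
  qed
  have "RY \<subseteq> ?W" using RY_sub SZ_JZ unfolding SZ_def by blast
  then have "J \<subseteq> ?W" using ideal unfolding J_gen by blast
  then show ?thesis by blast
qed

lemma e_pi:
  assumes a: "a \<in> carrier (free_alg K Z)" and b: "b \<in> carrier (free_alg K Z)" and ab: "pi a = pi b"
  shows "e a = e b"
proof -
  have "a \<ominus>\<^bsub>free_alg K Z\<^esub> b \<in> KerZ" using pi_eq[OF a b] ab JZ_Ker by blast
  then have "e (a \<ominus>\<^bsub>free_alg K Z\<^esub> b) = \<zero>\<^bsub>A\<^esub>" unfolding KerZ_def by simp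
  then have "e a \<ominus>\<^bsub>A\<^esub> e b = \<zero>\<^bsub>A\<^esub>" using ahom_minus[OF FZ.kalg_axioms kA e_hom a b] by simp
  then show ?thesis using AA.sub_eq0[OF ahomD(1)[OF e_hom a] ahomD(1)[OF e_hom b]] by simp
qed

lemma Ker_JZ: "KerZ \<subseteq> JZ"
proof
  fix p assume pK: "p \<in> KerZ"
  then have pc: "p \<in> carrier (free_alg K Z)" and ep: "e p = \<zero>\<^bsub>A\<^esub>" unfolding KerZ_def by auto
  obtain u t where h: "u \<in> carrier (free_alg K X)" "t \<in> PY" "p = iota u \<oplus>\<^bsub>free_alg K Z\<^esub> t"
    using PZ[OF pc] by blast
  obtain q where q: "q \<in> carrier (free_alg K Y)" "pi t = pi q" using h(2) by (rule PY_E)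
  have ic: "iota u \<in> carrier (free_alg K Z)" using ahomD(1)[OF iota_hom h(1)] .
  have tc: "t \<in> carrier (free_alg K Z)" using PY_c[OF h(2)] .
  have qc: "q \<in> carrier (free_alg K Z)" using FYZ[OF q(1)] .
  have et: "e t = e q" using e_pi[OF tc qc q(2)] .
  have eqB: "e q \<in> B" using eY[OF q(1)] by simp
  have eic: "e (iota u) \<in> carrier A" using ahomD(1)[OF e_hom ic] .
  have eqc: "e q \<in> carrier A" using eqB B_sub by blast
  have "e (iota u) \<oplus>\<^bsub>A\<^esub> e q = \<zero>\<^bsub>A\<^esub>" using ep h(3) ahomD(2)[OF e_hom ic tc] et by simp
  then have "e (iota u) = \<ominus>\<^bsub>A\<^esub> e q" using eic eqc by (metis AA.add.inv_equality AA.a_comm)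
  then have "e (iota u) \<in> B" using eqB idB unfolding alg_ideal_def by auto
  then have "alg_coset A B (e (iota u)) = alg_coset A B \<zero>\<^bsub>A\<^esub>" using AA.coset_zero_iff[OF idB eic] by simp
  then have "chi (e (iota u)) = I" unfolding chi_def using hX_zero AA.quot_zero[OF idB] by simp
  then have "alg_coset (free_alg K X) I u = alg_coset (free_alg K X) I \<zero>\<^bsub>free_alg K X\<^esub>"
    using chiX[OF h(1)] FX.quot_zero[OF idI] by simp
  then have "u \<in> I" using FX.coset_zero_iff[OF idI h(1)] by simp
  then have "iota u \<in> PY" using WX by blast
  then obtain q2 where q2: "q2 \<in> carrier (free_alg K Y)" "pi (iota u) = pi q2" by (rule PY_E)
  have q2c: "q2 \<in> carrier (free_alg K Z)" using FYZ[OF q2(1)] .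
  define r where "r = q2 \<oplus>\<^bsub>free_alg K Z\<^esub> q"
  have rY: "r \<in> carrier (free_alg K Y)" unfolding r_def using FY.a_closed[OF q2(1) q(1)] by (simp add: FY_ops)
  have rc: "r \<in> carrier (free_alg K Z)" using FYZ[OF rY] .
  have pir: "pi p = pi r" unfolding r_def h(3) using pi_add[OF ic tc] pi_add[OF q2c qc] q q2 by simp
  have "e r = \<zero>\<^bsub>A\<^esub>" using e_pi[OF pc rc pir] ep by simp
  then have "alg_coset (free_alg K Y) J r = J" using eY[OF rY] hB_zero by simp
  then have "r \<in> J" using FY.coset_zero_iff[OF idJ rY] FY.quot_zero[OF idJ] by simp
  then have "r \<in> JZ" using WY by blast
  then have "pi r = pi \<zero>\<^bsub>free_alg K Z\<^esub>" using pi_eq[OF rc FZ.zero_closed] rc by (simp add: a_minus_def FZ.t10)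
  then have "p \<ominus>\<^bsub>free_alg K Z\<^esub> \<zero>\<^bsub>free_alg K Z\<^esub> \<in> JZ" using pir pi_eq[OF pc FZ.zero_closed] by simp
  then show "p \<in> JZ" using pc by (simp add: a_minus_def FZ.t10)
qed

lemma fp_result: "fp_algebra K A"
proof -
  have KJ: "KerZ = JZ" using Ker_JZ JZ_Ker by blast
  have fi: "alg_ideal K (free_alg K Z) KerZ \<and> alg_iso K A (quot_alg K (free_alg K Z) KerZ)"
    using first_iso[OF FZ.kalg_axioms kA e_hom e_surj] unfolding KerZ_def by blast
  have "fg_ideal K (free_alg K Z) KerZ"
    unfolding fg_ideal_def using fi KJ finSZ SZ_sub unfolding JZ_def by blast
  then show ?thesis unfolding fp_algebra_def using fi finZ by blast
qed

end


lemma iso_unfold_B: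
  assumes "alg_iso K (A\<lparr>carrier := B\<rparr>) Q"
  obtains hB where "bij_betw hB B (carrier Q)"
    "\<forall>x\<in>B. \<forall>y\<in>B. hB (x \<oplus>\<^bsub>A\<^esub> y) = hB x \<oplus>\<^bsub>Q\<^esub> hB y \<and> hB (x \<otimes>\<^bsub>A\<^esub> y) = hB x \<otimes>\<^bsub>Q\<^esub> hB y"
    "\<forall>k\<in>carrier K. \<forall>x\<in>B. hB (k \<odot>\<^bsub>A\<^esub> x) = k \<odot>\<^bsub>Q\<^esub> hB x"
  using assms unfolding alg_iso_def by auto

lemma iso_unfold:
  assumes "alg_iso K C Q"
  obtains h where "bij_betw h (carrier C) (carrier Q)"
    "\<forall>x\<in>carrier C. \<forall>y\<in>carrier C. h (x \<oplus>\<^bsub>C\<^esub> y) = h x \<oplus>\<^bsub>Q\<^esub> h y \<and> h (x \<otimes>\<^bsub>C\<^esub> y) = h x \<otimes>\<^bsub>Q\<^esub> h y"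
    "\<forall>k\<in>carrier K. \<forall>x\<in>carrier C. h (k \<odot>\<^bsub>C\<^esub> x) = k \<odot>\<^bsub>Q\<^esub> h x"
  using assms unfolding alg_iso_def by auto

theorem lemma2p2:
  fixes K :: "('k,'e) ring_scheme" and A :: "('k,'a) module" and B :: "'a set"
  assumes "cring K" and "K_algebra K A" and "alg_ideal K A B"
  shows "(fg_algebra K (A\<lparr>carrier := B\<rparr>) \<and> fg_algebra K (quot_alg K A B) \<longrightarrow> fg_algebra K A)
       \<and> (fp_algebra K (A\<lparr>carrier := B\<rparr>) \<and> fp_algebra K (quot_alg K A B) \<longrightarrow> fp_algebra K A)"
proof (intro conjI impI)
  have kA: "kalg K A" using assms(2) by (rule K_algebra_kalg)
  {
    assume h: "fg_algebra K (A\<lparr>carrier := B\<rparr>) \<and> fg_algebra K (quot_alg K A B)"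
    obtain Y J where Y: "finite Y" "alg_ideal K (free_alg K Y) J"
      "alg_iso K (A\<lparr>carrier := B\<rparr>) (quot_alg K (free_alg K Y) J)"
      using h unfolding fg_algebra_def by blast
    obtain hB where hB: "bij_betw hB B (carrier (quot_alg K (free_alg K Y) J))"
      "\<forall>x\<in>B. \<forall>y\<in>B. hB (x \<oplus>\<^bsub>A\<^esub> y) = hB x \<oplus>\<^bsub>quot_alg K (free_alg K Y) J\<^esub> hB y \<and>
          hB (x \<otimes>\<^bsub>A\<^esub> y) = hB x \<otimes>\<^bsub>quot_alg K (free_alg K Y) J\<^esub> hB y"
      "\<forall>k\<in>carrier K. \<forall>x\<in>B. hB (k \<odot>\<^bsub>A\<^esub> x) = k \<odot>\<^bsub>quot_alg K (free_alg K Y) J\<^esub> hB x"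
      using iso_unfold_B[OF Y(3)] by metis
    obtain X I where X: "finite X" "alg_ideal K (free_alg K X) I"
      "alg_iso K (quot_alg K A B) (quot_alg K (free_alg K X) I)"
      using h unfolding fg_algebra_def by blast
    obtain hX where hX: "bij_betw hX (carrier (quot_alg K A B)) (carrier (quot_alg K (free_alg K X) I))"
      "\<forall>x\<in>carrier (quot_alg K A B). \<forall>y\<in>carrier (quot_alg K A B).
        hX (x \<oplus>\<^bsub>quot_alg K A B\<^esub> y) = hX x \<oplus>\<^bsub>quot_alg K (free_alg K X) I\<^esub> hX y \<and>
        hX (x \<otimes>\<^bsub>quot_alg K A B\<^esub> y) = hX x \<otimes>\<^bsub>quot_alg K (free_alg K X) I\<^esub> hX y"
      "\<forall>k\<in>carrier K. \<forall>x\<in>carrier (quot_alg K A B).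
        hX (k \<odot>\<^bsub>quot_alg K A B\<^esub> x) = k \<odot>\<^bsub>quot_alg K (free_alg K X) I\<^esub> hX x"
      using iso_unfold[OF X(3)] by metis
    interpret E: ext K A B X I hX Y J hB
      by (rule ext.intro) (use assms kA X Y hX hB in auto)
    show "fg_algebra K A" by (rule E.fg_result)
  }
  {
    assume h: "fp_algebra K (A\<lparr>carrier := B\<rparr>) \<and> fp_algebra K (quot_alg K A B)"
    obtain Y J where Y: "finite Y" "fg_ideal K (free_alg K Y) J"
      "alg_iso K (A\<lparr>carrier := B\<rparr>) (quot_alg K (free_alg K Y) J)"
      using h unfolding fp_algebra_def by blast
    obtain RY where RY: "finite RY" "RY \<subseteq> carrier (free_alg K Y)"
      "J = \<Inter>{J'. alg_ideal K (free_alg K Y) J' \<and> RY \<subseteq> J'}" "alg_ideal K (free_alg K Y) J"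
      using Y(2) unfolding fg_ideal_def by blast
    obtain hB where hB: "bij_betw hB B (carrier (quot_alg K (free_alg K Y) J))"
      "\<forall>x\<in>B. \<forall>y\<in>B. hB (x \<oplus>\<^bsub>A\<^esub> y) = hB x \<oplus>\<^bsub>quot_alg K (free_alg K Y) J\<^esub> hB y \<and>
          hB (x \<otimes>\<^bsub>A\<^esub> y) = hB x \<otimes>\<^bsub>quot_alg K (free_alg K Y) J\<^esub> hB y"
      "\<forall>k\<in>carrier K. \<forall>x\<in>B. hB (k \<odot>\<^bsub>A\<^esub> x) = k \<odot>\<^bsub>quot_alg K (free_alg K Y) J\<^esub> hB x"
      using iso_unfold_B[OF Y(3)] by metis
    obtain X I where X: "finite X" "fg_ideal K (free_alg K X) I"
      "alg_iso K (quot_alg K A B) (quot_alg K (free_alg K X) I)"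
      using h unfolding fp_algebra_def by blast
    obtain RX where RX: "finite RX" "RX \<subseteq> carrier (free_alg K X)"
      "I = \<Inter>{J'. alg_ideal K (free_alg K X) J' \<and> RX \<subseteq> J'}" "alg_ideal K (free_alg K X) I"
      using X(2) unfolding fg_ideal_def by blast
    obtain hX where hX: "bij_betw hX (carrier (quot_alg K A B)) (carrier (quot_alg K (free_alg K X) I))"
      "\<forall>x\<in>carrier (quot_alg K A B). \<forall>y\<in>carrier (quot_alg K A B).
        hX (x \<oplus>\<^bsub>quot_alg K A B\<^esub> y) = hX x \<oplus>\<^bsub>quot_alg K (free_alg K X) I\<^esub> hX y \<and>
        hX (x \<otimes>\<^bsub>quot_alg K A B\<^esub> y) = hX x \<otimes>\<^bsub>quot_alg K (free_alg K X) I\<^esub> hX y"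
      "\<forall>k\<in>carrier K. \<forall>x\<in>carrier (quot_alg K A B).
        hX (k \<odot>\<^bsub>quot_alg K A B\<^esub> x) = k \<odot>\<^bsub>quot_alg K (free_alg K X) I\<^esub> hX x"
      using iso_unfold[OF X(3)] by metis
    interpret E: ext_fp K A B X I hX Y J hB RX RY
      by (rule ext_fp.intro, rule ext.intro, use assms kA X Y hX hB RX RY in auto)
         (rule ext_fp_axioms.intro, use RX RY in auto)
    show "fp_algebra K A" by (rule E.fp_result)
  }
qed

end
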